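(* Assume $\mu_1=\mu_2=\mu_3=1$ and fix decision points. (i) If $\mathcal P$ is finite, then the triangle process has finitely many periodic orbits and every trajectory, from any starting point, converges onto one of them. (ii) (Whether or not $\mathcal P$ is finite.) If $z\notin\overline{\mathcal P}$ and the trajectory starting at $z$ converges onto the periodic orbit $u_1,\dots,u_m$, then there is $\varepsilon>0$ such that from every $z'\in\mathcal N_\varepsilon(z)$ there is a unique trajectory, and it converges onto this orbit. (iii) Any periodic orbit $u_1,\dots,u_m$ with $u_n\notin\overline{\mathcal P}$ for every $n$ is stable.
   Context: Fix $\rho_1,\rho_2,\rho_3\in(0,1)$ with $\rho_1+\rho_2+\rho_3>1$, $\mu_i=1$, $\theta:=\rho_1+\rho_2+\rho_3-1$. $A_i^0:=\{y\in\mathbb R^3: y_1+y_2+y_3=1, y_i=0, y_l\ge0\}$, $A^0:=\bigcup_iA_i^0$; for $z\in A^0\setminus A_j^0$, $f_j(z):=\sum_{i\neq j}\frac{(1-\rho_j)z_i+\rho_i z_j}{(1-\rho_j)+\theta z_j}e_i$. For $(\hat i,\hat j,\hat k)$ equal to $(1,2,3)$ or a cyclic permutation, $(1-x)e_{\hat j}+xe_{\hat k}\in A^0_{\hat i}$ is written $(x,\hat i)$, $\pi((x,\hat i)):=x$. $|z-z'|_1:=\|z-z'\|/\sqrt2$. Decision points $d_1,d_2,d_3\in(0,1)$ (identified with $(d_{\hat i},\hat i)$); switching rule $\mathfrak R((x,\hat i))=\hat j$ if $x<d_{\hat i}$, $\hat k$ if $x>d_{\hat i}$, both allowed if $x=d_{\hat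 i}$; $\varphi(z):=f_{\mathfrak R(z)}(z)$. A trajectory is $(z(t))_{t\ge0}$ with $z(t+1)\in\varphi(z(t))$. $z$ is a pre-image of $z'$ if some trajectory from $z$ has $z(t)=z'$ for some $t\ge1$. $\mathcal P$ is the set consisting of the decision points and all their pre-images; $\overline{\mathcal P}$ its closure. Periodic orbit: $u_1,\dots,u_m$ with $u_{n+1}\in\varphi(u_n)$, $u_1\in\varphi(u_m)$. A trajectory converges onto it if there is $n_0$ with $|z(mt+n+n_0)-u_n|_1\to0$ ($t\to\infty$) for each $n$. For $z=(x,\hat i)$, $\mathcal N_\varepsilon(z):=\{z'\in A^0_{\hat i}:|\pi(z')-x|<\varepsilon\}$. An orbit is stable if for each $n$ there is $\varepsilon>0$ such that all trajectories from any $z\in\mathcal N_\varepsilon(u_n)$ converge onto the orbit. *)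

theory Defs
  imports "HOL-Analysis.Analysis"
begin

(* Indices 1,2,3 of the paper are the elements 1,2,3 (= 0) of the numeral type 3.
   Cyclic triples (i,j,k) in {(1,2,3),(2,3,1),(3,1,2)} are exactly (i, i+1, i+2) mod 3.
   rho :: 3 => real are the loads rho_1,rho_2,rho_3 (mu_i = 1); d :: 3 => real the decision points. *)

type_synonym pt = "real ^ 3"

definition e :: "3 \<Rightarrow> pt" where
  "e i = axis i 1"

definition theta :: "(3 \<Rightarrow> real) \<Rightarrow> real" where
  "theta \<rho> = \<rho> 1 + \<rho> 2 + \<rho> 3 - 1"

definition A0i :: "3 \<Rightarrow> pt set" where
  "A0i i = {y. y$1 + y$2 + y$3 = 1 \<and> y$i = 0 \<and> (\<forall>l. y$l \<ge> 0)}"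

definition A0 :: "pt set" where
  "A0 = (\<Union>i. A0i i)"

definition f :: "(3 \<Rightarrow> real) \<Rightarrow> 3 \<Rightarrow> pt \<Rightarrow> pt" where
  "f \<rho> j z = (\<Sum>i\<in>UNIV - {j}.
      (((1 - \<rho> j) * z$i + \<rho> i * z$j) / ((1 - \<rho> j) + theta \<rho> * z$j)) *\<^sub>R e i)"

definition P :: "3 \<Rightarrow> real \<Rightarrow> pt" where
  "P i x = (1 - x) *\<^sub>R e (i + 1) + x *\<^sub>R e (i + 2)"

definition rule :: "(3 \<Rightarrow> real) \<Rightarrow> pt \<Rightarrow> 3 set" where
  "rule d z = {j. \<exists>i x. 0 \<le> x \<and> x \<le> 1 \<and> z = P i x \<and>
      ((x < d i \<and> j = i + 1) \<or> (x > d i \<and> j = i + 2) \<or> (x = d i \<and> (j = i + 1 \<or> j = i + 2)))}"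

definition phi :: "(3 \<Rightarrow> real) \<Rightarrow> (3 \<Rightarrow> real) \<Rightarrow> pt \<Rightarrow> pt set" where
  "phi \<rho> d z = {f \<rho> j z | j. j \<in> rule d z}"

definition trajectory :: "(3 \<Rightarrow> real) \<Rightarrow> (3 \<Rightarrow> real) \<Rightarrow> (nat \<Rightarrow> pt) \<Rightarrow> bool" where
  "trajectory \<rho> d w \<longleftrightarrow> (\<forall>t. w (Suc t) \<in> phi \<rho> d (w t))"

definition preimage :: "(3 \<Rightarrow> real) \<Rightarrow> (3 \<Rightarrow> real) \<Rightarrow> pt \<Rightarrow> pt \<Rightarrow> bool" where
  "preimage \<rho> d z z' \<longleftrightarrow> (\<exists>w t. trajectory \<rho> d w \<and> w 0 = z \<and> t \<ge> 1 \<and> w t = z')"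

definition dpoint :: "(3 \<Rightarrow> real) \<Rightarrow> 3 \<Rightarrow> pt" where
  "dpoint d i = P i (d i)"

definition Pset :: "(3 \<Rightarrow> real) \<Rightarrow> (3 \<Rightarrow> real) \<Rightarrow> pt set" where
  "Pset \<rho> d = range (dpoint d) \<union> {z. \<exists>i. preimage \<rho> d z (dpoint d i)}"

definition dist1 :: "pt \<Rightarrow> pt \<Rightarrow> real" where
  "dist1 z z' = norm (z - z') / sqrt 2"

text \<open>Periodic orbit u_1,...,u_m (indices 1..m of u).\<close>
definition periodic_orbit :: "(3 \<Rightarrow> real) \<Rightarrow> (3 \<Rightarrow> real) \<Rightarrow> nat \<Rightarrow> (nat \<Rightarrow> pt) \<Rightarrow> bool" where
  "periodic_orbit \<rho> d m u \<longleftrightarrow> m \<ge> 1 \<and>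
     (\<forall>n\<in>{1..<m}. u (Suc n) \<in> phi \<rho> d (u n)) \<and> u 1 \<in> phi \<rho> d (u m)"

definition converges_onto :: "(nat \<Rightarrow> pt) \<Rightarrow> nat \<Rightarrow> (nat \<Rightarrow> pt) \<Rightarrow> bool" where
  "converges_onto w m u \<longleftrightarrow>
     (\<exists>n0. \<forall>n\<in>{1..m}. ((\<lambda>t. dist1 (w (m * t + n + n0)) (u n)) \<longlongrightarrow> 0) sequentially)"

definition Nbhd :: "real \<Rightarrow> 3 \<Rightarrow> real \<Rightarrow> pt set" where
  "Nbhd \<epsilon> i x = {z'. \<exists>x'. 0 \<le> x' \<and> x' \<le> 1 \<and> z' = P i x' \<and> \<bar>x' - x\<bar> < \<epsilon>}"

definition stable :: "(3 \<Rightarrow> real) \<Rightarrow> (3 \<Rightarrow> real) \<Rightarrow> nat \<Rightarrow> (nat \<Rightarrow> pt) \<Rightarrow> bool" where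
  "stable \<rho> d m u \<longleftrightarrow> (\<forall>n\<in>{1..m}. \<forall>i x. 0 \<le> x \<and> x \<le> 1 \<and> u n = P i x \<longrightarrow>
     (\<exists>\<epsilon>>0. \<forall>z'\<in>Nbhd \<epsilon> i x. \<forall>w. trajectory \<rho> d w \<and> w 0 = z' \<longrightarrow> converges_onto w m u))"

end

theory Submission
  imports Defs
begin

lemma num3 [simp]: "(4::3) = 1" "(5::3) = 2" "(6::3) = 3"
  by (simp_all add: eq_numeral_iff_iszero bit1.iszero_numeral)

lemma c3: fixes i :: 3 obtains "i = 1" | "i = 2" | "i = 3" using exhaust_3 by blast

lemma e_nth: "e i $ k = (if k = i then 1 else 0)"
  by (simp add: e_def axis_def)

lemma three_ne:
  fixes i :: 3
  shows "i + 1 \<noteq> i" "i + 2 \<noteq> i" "i + 1 \<noteq> i + 2" "i \<noteq> i + 1" "i \<noteq> i + 2" "i + 2 \<noteq> i + 1"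
    "i + 3 = i" "i + 1 + 1 = i + 2" "i + 1 + 2 = i" "i + 2 + 1 = i" "i + 2 + 2 = i + 1"
  by (cases i rule: c3; simp)+

lemma three_cases:
  fixes i k :: 3
  obtains "k = i" | "k = i + 1" | "k = i + 2"
  by (cases i rule: c3; cases k rule: c3; simp)

lemma P_nth: "P i x $ k = (if k = i + 1 then 1 - x else if k = i + 2 then x else 0)"
  using three_ne[of i] by (auto simp: P_def e_nth)

lemma sum_nth: "(sum g A) $ k = sum (\<lambda>l. g l $ k) A"
  by (subst sum_eq) simp

lemma f_nth: "f \<rho> j z $ k = (if k = j then 0 else
   ((1 - \<rho> j) * z$k + \<rho> k * z$j) / ((1 - \<rho> j) + theta \<rho> * z$j))"
  unfolding f_def sum_nth by (simp add: e_nth if_distrib cong: if_cong)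

definition Lm :: "(3 \<Rightarrow> real) \<Rightarrow> 3 \<Rightarrow> real \<Rightarrow> real" where
  "Lm \<rho> i x = \<rho> i * (1 - x) / ((1 - \<rho> (i+1)) + theta \<rho> * (1 - x))"
definition Rm :: "(3 \<Rightarrow> real) \<Rightarrow> 3 \<Rightarrow> real \<Rightarrow> real" where
  "Rm \<rho> i x = ((1 - \<rho> (i+2)) * (1 - x) + \<rho> (i+1) * x) / ((1 - \<rho> (i+2)) + theta \<rho> * x)"


lemma frac_mono: "0 < s \<Longrightarrow> s \<le> S \<Longrightarrow> 0 < (c::real) \<Longrightarrow> s / (s + c) \<le> S / (S + c)"
  by (simp add: divide_simps) (simp add: algebra_simps mult_right_mono)

lemma ln_contr:
  fixes a c V v v' :: real
  assumes a: "a > 0" and c: "c > 0" and "v \<le> V" "v' \<le> V"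
  shows "\<bar>ln (a * exp v + c) - ln (a * exp v' + c)\<bar> \<le> (a * exp V / (a * exp V + c)) * \<bar>v - v'\<bar>"
proof -
  define k where "k = a * exp V / (a * exp V + c)"
  have key: "ln (a*exp t' + c) - ln (a*exp t + c) \<le> k * (t' - t) \<and> ln (a*exp t + c) \<le> ln (a*exp t' + c)"
    if tt: "t \<le> t'" "t' \<le> V" for t t'
  proof
    have "k * t - ln (a * exp t + c) \<le> k * t' - ln (a * exp t' + c)"
    proof (rule DERIV_nonneg_imp_nondecreasing[OF tt(1)])
      fix x assume x: "t \<le> x" "x \<le> t'"
      have pos: "a * exp x + c > 0" using a c by (simp add: add_pos_pos)
      have D: "((\<lambda>x. k * x - ln (a * exp x + c)) has_real_derivative (k - a * exp x / (a * exp x + c))) (at x)"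
        using pos by (auto intro!: derivative_eq_intros)
      have "a * exp x / (a * exp x + c) \<le> k" unfolding k_def
        by (rule frac_mono) (use a c x tt in auto)
      thus "\<exists>y. ((\<lambda>x. k * x - ln (a * exp x + c)) has_real_derivative y) (at x) \<and> 0 \<le> y"
        using D by auto
    qed
    thus "ln (a*exp t' + c) - ln (a*exp t + c) \<le> k * (t' - t)" by (simp add: algebra_simps)
    have "a * exp t + c \<le> a * exp t' + c" using a tt by simp
    thus "ln (a*exp t + c) \<le> ln (a*exp t' + c)" using a c by (subst ln_le_cancel_iff) (auto intro: add_pos_pos)
  qed
  have "\<bar>ln (a * exp v + c) - ln (a * exp v' + c)\<bar> \<le> k * \<bar>v - v'\<bar>"
  proof (cases "v \<le> v'")
    case True thus ?thesis using key[of v v'] assms by auto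
  next
    case False thus ?thesis using key[of v' v] assms by auto
  qed
  thus ?thesis unfolding k_def .
qed

definition lo :: "real \<Rightarrow> real" where "lo x = ln x - ln (1 - x)"
definition logi :: "real \<Rightarrow> real" where "logi v = exp v / (1 + exp v)"

lemma logi_range: "0 < logi v" "logi v < 1"
  unfolding logi_def by (simp_all add: add_pos_pos)

lemma logi_lo: "0 < x \<Longrightarrow> x < 1 \<Longrightarrow> logi (lo x) = x"
  unfolding logi_def lo_def by (simp add: exp_diff divide_simps)

lemma lo_inj: "0 < x \<Longrightarrow> x < 1 \<Longrightarrow> 0 < y \<Longrightarrow> y < 1 \<Longrightarrow> lo x = lo y \<Longrightarrow> x = y"
  by (metis logi_lo)

lemma exp_lo: "0 < x \<Longrightarrow> x < 1 \<Longrightarrow> exp (lo x) = x / (1 - x)"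
  unfolding lo_def by (simp add: exp_diff)

lemma lo_mono: "0 < x \<Longrightarrow> x \<le> y \<Longrightarrow> y < 1 \<Longrightarrow> lo x \<le> lo y"
  unfolding lo_def by (smt (verit) ln_le_cancel_iff)

lemma lo_lip: "0 < x \<Longrightarrow> x < 1 \<Longrightarrow> 0 < y \<Longrightarrow> y < 1 \<Longrightarrow> \<bar>x - y\<bar> \<le> \<bar>lo x - lo y\<bar>"
proof -
  have main: "y - x \<le> lo y - lo x" if h: "0 < x" "x \<le> y" "y < 1" for x y :: real
  proof -
    have "ln y - ln x \<ge> (y - x) / y"
    proof -
      have "ln (x / y) \<le> x / y - 1" using h by (intro ln_le_minus_one) simp
      hence "ln x - ln y \<le> x / y - 1" using h by (simp add: ln_div)
      moreover have "x / y - 1 = - ((y - x) / y)" using h by (simp add: field_simps)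
      ultimately show ?thesis by linarith
    qed
    moreover have "(y - x) / y \<ge> y - x" using h by (simp add: divide_simps mult_left_le)
    moreover have "ln (1 - y) \<le> ln (1 - x)" using h by simp
    ultimately show ?thesis unfolding lo_def by linarith
  qed
  assume "0 < x" "x < 1" "0 < y" "y < 1"
  thus ?thesis using main[of x y] main[of y x] by (cases "x \<le> y") auto
qed


lemma norm_P: "norm (P s a - P s b) = sqrt 2 * \<bar>a - b\<bar>"
proof -
  have sq: "sqrt ((a - b)\<^sup>2 + (b - a)\<^sup>2) = sqrt 2 * \<bar>a - b\<bar>"
  proof -
    have "(a - b)\<^sup>2 + (b - a)\<^sup>2 = 2 * (a - b)\<^sup>2" by (simp add: power2_eq_square algebra_simps)
    thus ?thesis by (simp add: real_sqrt_mult)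
  qed
  have "norm (P s a - P s b) = sqrt (\<Sum>k\<in>UNIV. ((P s a - P s b) $ k)\<^sup>2)"
    unfolding norm_vec_def L2_set_def by simp
  also have "\<dots> = sqrt ((a - b)\<^sup>2 + (b - a)\<^sup>2)"
    unfolding sum_3 by (cases s rule: c3) (simp_all add: P_nth power2_eq_square algebra_simps)
  finally show ?thesis using sq by simp
qed

lemma dist1_P: "dist1 (P s a) (P s b) = \<bar>a - b\<bar>"
  unfolding dist1_def norm_P by simp

lemma dist1_tri: "dist1 a c \<le> dist1 a b + dist1 b c"
  unfolding dist1_def using norm_triangle_ineq[of "a - b" "b - c"] by (simp add: divide_simps add_divide_distrib[symmetric])

lemma dist1_nonneg: "0 \<le> dist1 a b" unfolding dist1_def by simp


lemma ivt_mm: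
  fixes g :: "real \<Rightarrow> real"
  assumes "continuous_on {a..b} g" "a \<le> b" "min (g a) (g b) \<le> q" "q \<le> max (g a) (g b)"
  shows "\<exists>c. a \<le> c \<and> c \<le> b \<and> g c = q"
proof (cases "g a \<le> g b")
  case True thus ?thesis using IVT'[of g a q b] assms by auto
next
  case False thus ?thesis using IVT2'[of g b q a] assms by auto
qed


lemma conv_transfer:
  assumes c: "converges_onto w0 m u" and t: "(\<lambda>t. dist1 (w t) (w0 t)) \<longlonglongrightarrow> 0"
  shows "converges_onto w m u"
proof -
  obtain n0 where n0: "\<forall>n\<in>{1..m}. ((\<lambda>t. dist1 (w0 (m * t + n + n0)) (u n)) \<longlongrightarrow> 0) sequentially"
    using c unfolding converges_onto_def by blast
  have "\<forall>n\<in>{1..m}. ((\<lambda>t. dist1 (w (m * t + n + n0)) (u n)) \<longlongrightarrow> 0) sequentially"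
  proof
    fix n assume n: "n \<in> {1..m}"
    hence m1: "m \<ge> 1" by auto
    have sm: "strict_mono (\<lambda>t. m * t + n + n0)" using m1 by (intro strict_monoI) simp
    have a: "(\<lambda>t. dist1 (w (m * t + n + n0)) (w0 (m * t + n + n0))) \<longlonglongrightarrow> 0"
      using LIMSEQ_subseq_LIMSEQ[OF t sm] by (simp add: o_def)
    have b: "(\<lambda>t. dist1 (w (m * t + n + n0)) (w0 (m * t + n + n0)) + dist1 (w0 (m * t + n + n0)) (u n)) \<longlonglongrightarrow> 0"
      using tendsto_add[OF a n0[rule_format, OF n]] by simp
    show "((\<lambda>t. dist1 (w (m * t + n + n0)) (u n)) \<longlongrightarrow> 0) sequentially"
      by (rule tendsto_sandwich[OF _ _ tendsto_const b]) (auto simp: dist1_nonneg dist1_tri)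
  qed
  thus ?thesis unfolding converges_onto_def by blast
qed

lemma geo_to_zero:
  assumes "\<And>m. 0 \<le> a m" "\<And>m. a m \<le> k ^ m * C" "0 \<le> (k::real)" "k < 1"
  shows "a \<longlonglongrightarrow> 0"
proof (rule tendsto_sandwich[OF _ _ tendsto_const])
  show "(\<lambda>m. k ^ m * C) \<longlonglongrightarrow> 0" by (rule tendsto_mult_left_zero[OF LIMSEQ_power_zero]) (use assms in simp)
qed (use assms in auto)

locale sys =
  fixes \<rho> d :: "3 \<Rightarrow> real"
  assumes rho: "\<forall>i. 0 < \<rho> i \<and> \<rho> i < 1"
    and heavy: "\<rho> 1 + \<rho> 2 + \<rho> 3 > 1"
    and dec: "\<forall>i. 0 < d i \<and> d i < 1"
begin

lemma th_pos: "theta \<rho> > 0" using heavy by (simp add: theta_def)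
lemma rho_sum: "\<rho> i + \<rho> (i+1) + \<rho> (i+2) = theta \<rho> + 1"
  by (cases i rule: c3) (simp_all add: theta_def)

lemma denL_pos: "0 \<le> x \<Longrightarrow> x \<le> 1 \<Longrightarrow> (1 - \<rho> (i+1)) + theta \<rho> * (1 - x) > 0"
proof -
  assume "0 \<le> x" "x \<le> 1"
  hence "theta \<rho> * (1 - x) \<ge> 0" using th_pos by simp
  moreover have "\<rho> (i+1) < 1" using rho by blast
  ultimately show ?thesis by linarith
qed
lemma denR_pos: "0 \<le> x \<Longrightarrow> x \<le> 1 \<Longrightarrow> (1 - \<rho> (i+2)) + theta \<rho> * x > 0"
proof -
  assume "0 \<le> x" "x \<le> 1"
  hence "theta \<rho> * x \<ge> 0" using th_pos by simp
  moreover have "\<rho> (i+2) < 1" using rho by blast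
  ultimately show ?thesis by linarith
qed

lemma fL: assumes "0 \<le> x" "x \<le> 1" shows "f \<rho> (i+1) (P i x) = P (i+1) (Lm \<rho> i x)"
proof -
  have D: "(1 - \<rho> (i+1)) + theta \<rho> * (1 - x) > 0" using denL_pos assms .
  have S: "theta \<rho> = \<rho> i + \<rho> (i+1) + \<rho> (i+2) - 1" using rho_sum[of i] by simp
  show ?thesis
  unfolding vec_eq_iff proof
    fix k show "f \<rho> (i+1) (P i x) $ k = P (i+1) (Lm \<rho> i x) $ k"
      using D three_ne[of i]
      by (cases k i rule: three_cases) (auto simp: f_nth P_nth Lm_def S field_simps)
  qed
qed

lemma fR: assumes "0 \<le> x" "x \<le> 1" shows "f \<rho> (i+2) (P i x) = P (i+2) (Rm \<rho> i x)"
proof -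
  have D: "(1 - \<rho> (i+2)) + theta \<rho> * x > 0" using denR_pos assms .
  have S: "theta \<rho> = \<rho> i + \<rho> (i+1) + \<rho> (i+2) - 1" using rho_sum[of i] by simp
  show ?thesis
  unfolding vec_eq_iff proof
    fix k show "f \<rho> (i+2) (P i x) $ k = P (i+2) (Rm \<rho> i x) $ k"
      using D three_ne[of i]
      by (cases k i rule: three_cases) (auto simp: f_nth P_nth Rm_def S field_simps)
  qed
qed

end

lemma P_eq_cases:
  assumes "P i x = P j y"
  shows "(j = i \<and> y = x) \<or> (j = i + 2 \<and> x = 0 \<and> y = 1) \<or> (j = i + 1 \<and> x = 1 \<and> y = 0)"
proof -
  have c: "\<And>k. P i x $ k = P j y $ k" using assms by simp
  show ?thesis
  proof (rule three_cases[of j i])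
    assume "j = i" thus ?thesis using c[of "i+2"] three_ne[of i] by (auto simp: P_nth)
  next
    assume "j = i + 1" thus ?thesis using c[of "i"] c[of "i+1"] three_ne[of i] by (auto simp: P_nth)
  next
    assume "j = i + 2" thus ?thesis using c[of "i"] c[of "i+2"] three_ne[of i] by (auto simp: P_nth)
  qed
qed

lemma P_vertex: "P i 0 = P (i+2) 1" "P i 1 = P (i+1) 0"
  unfolding vec_eq_iff using three_ne[of i] by (auto simp: P_nth)

lemma P_inj_int: "P i x = P j y \<Longrightarrow> 0 < x \<Longrightarrow> x < 1 \<Longrightarrow> j = i \<and> y = x"
  using P_eq_cases by blast

lemma P_inj_same: "P i x = P i y \<Longrightarrow> y = x"
  using P_eq_cases[of i x i y] three_ne[of i] by auto

context sys begin

lemma decI: "0 < d i" "d i < 1" using dec by auto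
lemma rhoI: "0 < \<rho> i" "\<rho> i < 1" using rho by auto

lemma rule_P:
  assumes "0 \<le> x" "x \<le> 1"
  shows "rule d (P i x) = (if x < d i then {i+1} else if d i < x then {i+2} else {i+1, i+2})"
proof (rule set_eqI)
  fix j
  show "j \<in> rule d (P i x) \<longleftrightarrow> j \<in> (if x < d i then {i+1} else if d i < x then {i+2} else {i+1, i+2})"
  proof
    assume "j \<in> rule d (P i x)"
    then obtain i' x' where h: "0 \<le> x'" "x' \<le> 1" "P i x = P i' x'"
      "(x' < d i' \<and> j = i' + 1) \<or> (x' > d i' \<and> j = i' + 2) \<or> (x' = d i' \<and> (j = i' + 1 \<or> j = i' + 2))"
      unfolding rule_def by blast
    from P_eq_cases[OF h(3)] show "j \<in> (if x < d i then {i+1} else if d i < x then {i+2} else {i+1, i+2})"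
      using h(4) decI[of i] decI[of "i+1"] decI[of "i+2"] three_ne[of i] by auto
  next
    assume "j \<in> (if x < d i then {i+1} else if d i < x then {i+2} else {i+1, i+2})"
    thus "j \<in> rule d (P i x)" unfolding rule_def using assms
      by (auto split: if_splits)
  qed
qed

lemma phi_P:
  assumes "0 \<le> x" "x \<le> 1"
  shows "phi \<rho> d (P i x) = (if x < d i then {P (i+1) (Lm \<rho> i x)} else if d i < x then {P (i+2) (Rm \<rho> i x)}
     else {P (i+1) (Lm \<rho> i x), P (i+2) (Rm \<rho> i x)})"
  unfolding phi_def rule_P[OF assms] using fL[OF assms, of i] fR[OF assms, of i] by (auto, metis+)

lemma phi_form: "y \<in> phi \<rho> d z \<Longrightarrow> \<exists>i x. 0 \<le> x \<and> x \<le> 1 \<and> z = P i x"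
  unfolding phi_def rule_def by blast

lemma Lm_range: "0 \<le> x \<Longrightarrow> x < 1 \<Longrightarrow> 0 < Lm \<rho> i x \<and> Lm \<rho> i x < 1"
proof -
  assume a: "0 \<le> x" "x < 1"
  have D: "(1 - \<rho> (i+1)) + theta \<rho> * (1 - x) > 0" using denL_pos a by simp
  have S: "theta \<rho> = \<rho> i + \<rho> (i+1) + \<rho> (i+2) - 1" using rho_sum[of i] by simp
  have "\<rho> i * (1 - x) < (1 - \<rho> (i+1)) + theta \<rho> * (1 - x)"
  proof -
    have "0 < (1 - \<rho> (i+1)) * x + \<rho> (i+2) * (1 - x)"
      using a rhoI[of "i+1"] rhoI[of "i+2"] by (smt (verit, best) mult_nonneg_nonneg mult_pos_pos)
    thus ?thesis unfolding S by (simp add: algebra_simps)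
  qed
  moreover have "0 < \<rho> i * (1 - x)" using a rhoI[of i] by simp
  ultimately show ?thesis using D by (simp add: Lm_def divide_simps)
qed

lemma Rm_range: "0 < x \<Longrightarrow> x \<le> 1 \<Longrightarrow> 0 < Rm \<rho> i x \<and> Rm \<rho> i x < 1"
proof -
  assume a: "0 < x" "x \<le> 1"
  have D: "(1 - \<rho> (i+2)) + theta \<rho> * x > 0" using denR_pos a by simp
  have S: "theta \<rho> = \<rho> i + \<rho> (i+1) + \<rho> (i+2) - 1" using rho_sum[of i] by simp
  have N: "0 < (1 - \<rho> (i+2)) * (1 - x) + \<rho> (i+1) * x"
    using a rhoI[of "i+1"] rhoI[of "i+2"] by (smt (verit, best) mult_nonneg_nonneg mult_pos_pos)
  have "(1 - \<rho> (i+2)) * (1 - x) + \<rho> (i+1) * x < (1 - \<rho> (i+2)) + theta \<rho> * x"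
  proof -
    have "0 < \<rho> i * x" using a rhoI[of i] by simp
    thus ?thesis unfolding S by (simp add: algebra_simps)
  qed
  thus ?thesis using D N by (simp add: Rm_def divide_simps)
qed

end


context sys begin

lemma phi_cases:
  assumes "0 \<le> x" "x \<le> 1" "y \<in> phi \<rho> d (P i x)"
  shows "(x \<le> d i \<and> y = P (i+1) (Lm \<rho> i x)) \<or> (d i \<le> x \<and> y = P (i+2) (Rm \<rho> i x))"
  using assms(3) unfolding phi_P[OF assms(1,2)] by (auto split: if_splits)

lemma phi_img_int: "y \<in> phi \<rho> d z \<Longrightarrow> \<exists>j v. 0 < v \<and> v < 1 \<and> y = P j v"
proof -
  assume y: "y \<in> phi \<rho> d z"
  then obtain i x where x: "0 \<le> x" "x \<le> 1" "z = P i x" using phi_form by blast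
  from phi_cases[OF x(1,2)] y x(3) decI[of i] show ?thesis
    using Lm_range[of x i] Rm_range[of x i] x(1,2) by force
qed

lemma phi_nonempty: "0 \<le> x \<Longrightarrow> x \<le> 1 \<Longrightarrow> \<exists>y j v. y \<in> phi \<rho> d (P i x) \<and> 0 < v \<and> v < 1 \<and> y = P j v"
proof -
  assume a: "0 \<le> x" "x \<le> 1"
  have "phi \<rho> d (P i x) \<noteq> {}" using phi_P[OF a, of i] by (auto split: if_splits)
  then obtain y where "y \<in> phi \<rho> d (P i x)" by blast
  thus ?thesis using phi_img_int by blast
qed

lemma phi_single:
  assumes "0 \<le> x" "x \<le> 1" "phi \<rho> d (P i x) = {P j y}"
  shows "(x < d i \<and> j = i+1 \<and> y = Lm \<rho> i x) \<or> (d i < x \<and> j = i+2 \<and> y = Rm \<rho> i x)"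
proof -
  have L: "0 < Lm \<rho> i x \<and> Lm \<rho> i x < 1" if "x \<le> d i" using Lm_range[of x i] assms(1) that decI[of i] by simp
  have R: "0 < Rm \<rho> i x \<and> Rm \<rho> i x < 1" if "d i \<le> x" using Rm_range[of x i] assms(2) that decI[of i] by simp
  consider "x < d i" | "d i < x" | "x = d i" by linarith
  thus ?thesis
  proof cases
    case 1
    hence "P (i+1) (Lm \<rho> i x) = P j y" using assms(3) unfolding phi_P[OF assms(1,2)] by auto
    thus ?thesis using P_inj_int[of "i+1" "Lm \<rho> i x" j y] L 1 by auto
  next
    case 2
    hence "P (i+2) (Rm \<rho> i x) = P j y" using assms(3) unfolding phi_P[OF assms(1,2)] by auto
    thus ?thesis using P_inj_int[of "i+2" "Rm \<rho> i x" j y] R 2 by auto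
  next
    case 3
    hence "P (i+1) (Lm \<rho> i x) = P (i+2) (Rm \<rho> i x)" using assms(3) unfolding phi_P[OF assms(1,2)]
      by (metis (no_types, lifting) insert_absorb insert_iff less_irrefl singleton_insert_inj_eq)
    hence False using P_inj_int[of "i+1" "Lm \<rho> i x" "i+2"] L 3 three_ne[of i] by auto
    thus ?thesis ..
  qed
qed

lemma traj_form: "trajectory \<rho> d w \<Longrightarrow> \<exists>i x. 0 \<le> x \<and> x \<le> 1 \<and> w t = P i x"
  unfolding trajectory_def using phi_form by blast

lemma traj_int: "trajectory \<rho> d w \<Longrightarrow> 1 \<le> t \<Longrightarrow> \<exists>i x. 0 < x \<and> x < 1 \<and> w t = P i x"
proof -
  assume "trajectory \<rho> d w" "1 \<le> t"
  then obtain t' where "t = Suc t'" by (cases t) auto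
  moreover have "w (Suc t') \<in> phi \<rho> d (w t')" using \<open>trajectory \<rho> d w\<close> unfolding trajectory_def by blast
  ultimately show ?thesis using phi_img_int by blast
qed

lemma traj_exists:
  assumes "0 \<le> x" "x \<le> 1"
  shows "\<exists>w. trajectory \<rho> d w \<and> w 0 = P i x"
proof -
  let ?Pf = "\<lambda>(n::nat) z. \<exists>i x. 0 \<le> x \<and> x \<le> 1 \<and> z = P i x"
  have "\<exists>w. \<forall>n. ?Pf n (w n) \<and> (w 0 = P i x \<or> n \<noteq> 0) \<and> w (Suc n) \<in> phi \<rho> d (w n)"
  proof -
    have "\<exists>w. \<forall>n. (?Pf n (w n) \<and> (n = 0 \<longrightarrow> w n = P i x)) \<and> w (Suc n) \<in> phi \<rho> d (w n)"
    proof (rule dependent_nat_choice)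
      show "\<exists>z. ?Pf 0 z \<and> (0 = (0::nat) \<longrightarrow> z = P i x)" using assms by blast
    next
      fix z n assume "?Pf n z \<and> (n = 0 \<longrightarrow> z = P i x)"
      then obtain i' x' where "0 \<le> x'" "x' \<le> 1" "z = P i' x'" by blast
      then obtain y j v where yy: "y \<in> phi \<rho> d z" "0 < v" "v < 1" "y = P j v" using phi_nonempty by blast
      hence "?Pf (Suc n) y" by (intro exI[of _ j] exI[of _ v]) auto
      thus "\<exists>y. (?Pf (Suc n) y \<and> (Suc n = 0 \<longrightarrow> y = P i x)) \<and> y \<in> phi \<rho> d z"
        using yy by blast
    qed
    thus ?thesis by blast
  qed
  thus ?thesis unfolding trajectory_def by blast
qed

lemma dp_in: "P i (d i) \<in> Pset \<rho> d"
  unfolding Pset_def dpoint_def by auto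

lemma back_S:
  assumes y: "y \<in> phi \<rho> d z" and yS: "y \<in> Pset \<rho> d"
  shows "z \<in> Pset \<rho> d"
proof -
  obtain j v where "0 < v" "v < 1" "y = P j v" using phi_img_int[OF y] by blast
  then obtain v0 where v0: "trajectory \<rho> d v0" "v0 0 = y" using traj_exists[of v j] by auto
  define w0 where "w0 = (\<lambda>t. if t = 0 then z else v0 (t - 1))"
  have tw0: "trajectory \<rho> d w0" unfolding trajectory_def w0_def
  proof
    fix t show "(if Suc t = 0 then z else v0 (Suc t - 1)) \<in> phi \<rho> d (if t = 0 then z else v0 (t - 1))"
      using v0 y unfolding trajectory_def by (cases t) auto
  qed
  from yS consider k where "y = dpoint d k" | k where "preimage \<rho> d y (dpoint d k)" unfolding Pset_def by blast
  thus ?thesis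
  proof cases
    case 1
    have "preimage \<rho> d z (dpoint d k)" unfolding preimage_def
      by (rule exI[of _ w0], rule exI[of _ 1]) (use tw0 v0 1 in \<open>auto simp: w0_def\<close>)
    thus ?thesis unfolding Pset_def by blast
  next
    case 2
    then obtain v1 t where v1: "trajectory \<rho> d v1" "v1 0 = y" "t \<ge> 1" "v1 t = dpoint d k"
      unfolding preimage_def by blast
    define w1 where "w1 = (\<lambda>s. if s = 0 then z else v1 (s - 1))"
    have tw1: "trajectory \<rho> d w1" unfolding trajectory_def w1_def
    proof
      fix s show "(if Suc s = 0 then z else v1 (Suc s - 1)) \<in> phi \<rho> d (if s = 0 then z else v1 (s - 1))"
        using v1 y unfolding trajectory_def by (cases s) auto
    qed
    have "preimage \<rho> d z (dpoint d k)" unfolding preimage_def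
      by (rule exI[of _ w1], rule exI[of _ "Suc t"]) (use tw1 v1 in \<open>auto simp: w1_def\<close>)
    thus ?thesis unfolding Pset_def by blast
  qed
qed

lemma mono_S:
  assumes "trajectory \<rho> d w" "w t \<in> Pset \<rho> d" "t' \<le> t"
  shows "w t' \<in> Pset \<rho> d"
  using assms(3,2)
proof (induction "t - t'" arbitrary: t')
  case 0 thus ?case by simp
next
  case (Suc k)
  hence "k = t - Suc t'" "Suc t' \<le> t" by auto
  hence "w (Suc t') \<in> Pset \<rho> d" using Suc.hyps(1) Suc.prems(2) by blast
  thus ?case using back_S assms(1) unfolding trajectory_def by blast
qed

end


context sys begin

lemma lo_Lm:
  assumes "0 < x" "x < 1"
  shows "lo (Lm \<rho> i x) = ln (\<rho> i) - ln ((1 - \<rho> (i+1)) * exp (lo x) + \<rho> (i+2))"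
proof -
  define D where "D = (1 - \<rho> (i+1)) + theta \<rho> * (1 - x)"
  define N where "N = \<rho> i * (1 - x)"
  define M where "M = (1 - \<rho> (i+1)) * x + \<rho> (i+2) * (1 - x)"
  have S: "theta \<rho> = \<rho> i + \<rho> (i+1) + \<rho> (i+2) - 1" using rho_sum[of i] by simp
  have Dp: "D > 0" unfolding D_def using denL_pos assms by simp
  have Np: "N > 0" unfolding N_def using assms rhoI[of i] by simp
  have Mp: "M > 0" unfolding M_def using assms rhoI[of "i+1"] rhoI[of "i+2"]
    by (smt (verit, best) mult_pos_pos)
  have DNM: "D - N = M" unfolding D_def N_def M_def S by (simp add: algebra_simps)
  have Lm: "Lm \<rho> i x = N / D" unfolding Lm_def N_def D_def ..
  have L1: "1 - Lm \<rho> i x = M / D" unfolding Lm using Dp DNM by (simp add: divide_simps)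
  have E: "(1 - \<rho> (i+1)) * exp (lo x) + \<rho> (i+2) = M / (1 - x)"
    unfolding exp_lo[OF assms] M_def using assms by (simp add: field_simps)
  have "lo (Lm \<rho> i x) = ln N - ln M"
    unfolding lo_def L1 unfolding Lm using Dp Np Mp by (simp add: ln_div)
  also have "\<dots> = ln (\<rho> i) - ln (M / (1 - x))"
    unfolding N_def using Mp assms rhoI[of i] by (simp add: ln_div ln_mult)
  finally show ?thesis unfolding E .
qed

lemma lo_Rm:
  assumes "0 < x" "x < 1"
  shows "lo (Rm \<rho> i x) = ln ((1 - \<rho> (i+2)) * exp (- lo x) + \<rho> (i+1)) - ln (\<rho> i)"
proof -
  define D where "D = (1 - \<rho> (i+2)) + theta \<rho> * x"
  define N where "N = (1 - \<rho> (i+2)) * (1 - x) + \<rho> (i+1) * x"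
  define M where "M = \<rho> i * x"
  have S: "theta \<rho> = \<rho> i + \<rho> (i+1) + \<rho> (i+2) - 1" using rho_sum[of i] by simp
  have Dp: "D > 0" unfolding D_def using denR_pos assms by simp
  have Np: "N > 0" unfolding N_def using assms rhoI[of "i+1"] rhoI[of "i+2"]
    by (smt (verit, best) mult_pos_pos)
  have Mp: "M > 0" unfolding M_def using assms rhoI[of i] by simp
  have DNM: "D - N = M" unfolding D_def N_def M_def S by (simp add: algebra_simps)
  have Rm: "Rm \<rho> i x = N / D" unfolding Rm_def N_def D_def ..
  have L1: "1 - Rm \<rho> i x = M / D" unfolding Rm using Dp DNM by (simp add: divide_simps)
  have em: "exp (- lo x) = (1 - x) / x" unfolding exp_minus exp_lo[OF assms] by simp
  have E: "(1 - \<rho> (i+2)) * exp (- lo x) + \<rho> (i+1) = N / x"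
    unfolding em N_def using assms by (simp add: field_simps)
  have "lo (Rm \<rho> i x) = ln N - ln M"
    unfolding lo_def L1 unfolding Rm using Dp Np Mp by (simp add: ln_div)
  also have "\<dots> = ln (N / x) - ln (\<rho> i)"
    unfolding M_def using Np assms rhoI[of i] by (simp add: ln_div ln_mult)
  finally show ?thesis unfolding E .
qed

definition kL :: "3 \<Rightarrow> real" where
  "kL i = (1 - \<rho> (i+1)) * exp (lo (d i)) / ((1 - \<rho> (i+1)) * exp (lo (d i)) + \<rho> (i+2))"
definition kR :: "3 \<Rightarrow> real" where
  "kR i = (1 - \<rho> (i+2)) * exp (- lo (d i)) / ((1 - \<rho> (i+2)) * exp (- lo (d i)) + \<rho> (i+1))"
definition kap :: real where "kap = Max (range kL \<union> range kR)"

lemma k_bounds: "0 \<le> kL i" "kL i < 1" "0 \<le> kR i" "kR i < 1"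
proof -
  have a: "1 - \<rho> (i+1) > 0" "1 - \<rho> (i+2) > 0" "\<rho> (i+1) > 0" "\<rho> (i+2) > 0" using rhoI by auto
  show "0 \<le> kL i" "kL i < 1" "0 \<le> kR i" "kR i < 1" unfolding kL_def kR_def using a
    by (simp_all add: divide_simps add_pos_pos)
qed

lemma kap_bounds: "kL i \<le> kap" "kR i \<le> kap" "0 \<le> kap" "kap < 1"
proof -
  have fin: "finite (range kL \<union> range kR)" by simp
  show 1: "kL i \<le> kap" "kR i \<le> kap" unfolding kap_def by (rule Max_ge[OF fin]; simp)+
  show "0 \<le> kap" using 1(1) k_bounds(1)[of i] by linarith
  show "kap < 1" unfolding kap_def using fin k_bounds by (subst Max_less_iff) auto
qed

lemma contr_L:
  assumes "0 < x" "x \<le> d i" "0 < x'" "x' \<le> d i"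
  shows "\<bar>lo (Lm \<rho> i x) - lo (Lm \<rho> i x')\<bar> \<le> kap * \<bar>lo x - lo x'\<bar>"
proof -
  have x1: "x < 1" "x' < 1" using assms decI[of i] by auto
  have "\<bar>lo (Lm \<rho> i x) - lo (Lm \<rho> i x')\<bar> =
     \<bar>ln ((1 - \<rho> (i+1)) * exp (lo x) + \<rho> (i+2)) - ln ((1 - \<rho> (i+1)) * exp (lo x') + \<rho> (i+2))\<bar>"
    unfolding lo_Lm[OF assms(1) x1(1)] lo_Lm[OF assms(3) x1(2)] by linarith
  also have "\<dots> \<le> kL i * \<bar>lo x - lo x'\<bar>" unfolding kL_def
    by (rule ln_contr) (use rhoI[of "i+1"] rhoI[of "i+2"] lo_mono decI[of i] assms in auto)
  also have "\<dots> \<le> kap * \<bar>lo x - lo x'\<bar>" using kap_bounds(1)[of i] by (simp add: mult_right_mono)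
  finally show ?thesis .
qed

lemma contr_R:
  assumes "d i \<le> x" "x < 1" "d i \<le> x'" "x' < 1"
  shows "\<bar>lo (Rm \<rho> i x) - lo (Rm \<rho> i x')\<bar> \<le> kap * \<bar>lo x - lo x'\<bar>"
proof -
  have x0: "0 < x" "0 < x'" using assms decI[of i] by auto
  have "\<bar>lo (Rm \<rho> i x) - lo (Rm \<rho> i x')\<bar> =
     \<bar>ln ((1 - \<rho> (i+2)) * exp (- lo x) + \<rho> (i+1)) - ln ((1 - \<rho> (i+2)) * exp (- lo x') + \<rho> (i+1))\<bar>"
    unfolding lo_Rm[OF x0(1) assms(2)] lo_Rm[OF x0(2) assms(4)] by linarith
  also have "\<dots> \<le> kR i * \<bar>(- lo x) - (- lo x')\<bar>" unfolding kR_def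
    by (rule ln_contr) (use rhoI[of "i+1"] rhoI[of "i+2"] lo_mono decI[of i] assms x0 in auto)
  also have "\<dots> \<le> kap * \<bar>lo x - lo x'\<bar>" using kap_bounds(2)[of i] by (simp add: abs_minus_commute mult_right_mono)
  finally show ?thesis .
qed

lemma contr:
  assumes "0 < x" "x < 1" "0 < x'" "x' < 1"
    and "phi \<rho> d (P s x) = {P s' y}" "phi \<rho> d (P s x') = {P s' y'}"
  shows "\<bar>lo y - lo y'\<bar> \<le> kap * \<bar>lo x - lo x'\<bar>"
proof -
  note A = phi_single[OF _ _ assms(5)] phi_single[OF _ _ assms(6)]
  have h: "(x < d s \<and> s' = s+1 \<and> y = Lm \<rho> s x) \<or> (d s < x \<and> s' = s+2 \<and> y = Rm \<rho> s x)"
          "(x' < d s \<and> s' = s+1 \<and> y' = Lm \<rho> s x') \<or> (d s < x' \<and> s' = s+2 \<and> y' = Rm \<rho> s x')"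
    using A assms(1-4) by auto
  thus ?thesis using contr_L[of x s x'] contr_R[of s x x'] assms(1-4) three_ne[of s] by auto
qed

end


context sys begin

lemma cont_Lm: "continuous_on {0..1} (Lm \<rho> i)"
proof -
  have "\<forall>x\<in>{0..1}. (1 - \<rho> (i+1)) + theta \<rho> * (1 - x) \<noteq> 0"
  proof
    fix x :: real assume "x \<in> {0..1}"
    thus "(1 - \<rho> (i+1)) + theta \<rho> * (1 - x) \<noteq> 0" using denL_pos[of x i] by auto
  qed
  thus ?thesis unfolding Lm_def by (intro continuous_intros) auto
qed
lemma cont_Rm: "continuous_on {0..1} (Rm \<rho> i)"
proof -
  have "\<forall>x\<in>{0..1}. (1 - \<rho> (i+2)) + theta \<rho> * x \<noteq> 0"
  proof
    fix x :: real assume "x \<in> {0..1}"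
    thus "(1 - \<rho> (i+2)) + theta \<rho> * x \<noteq> 0" using denR_pos[of x i] by auto
  qed
  thus ?thesis unfolding Rm_def by (intro continuous_intros) auto
qed

definition SEx :: "3 \<Rightarrow> real \<Rightarrow> real \<Rightarrow> bool" where
  "SEx s x x' \<longleftrightarrow> 0 \<le> x \<and> x \<le> 1 \<and> 0 \<le> x' \<and> x' \<le> 1 \<and>
     (\<forall>q. min x x' \<le> q \<and> q \<le> max x x' \<longrightarrow> P s q \<notin> Pset \<rho> d)"

lemma mm_swap: "min (g (min x x')) (g (max x x')) = min (g x) (g x')"
   "max (g (min x x')) (g (max x x')) = max (g x) (g (x'::real)::real)"
  by (cases "x \<le> x'"; simp add: min.commute max.commute min_def max_def)+

lemma step:
  assumes "SEx s x x'"
  shows "\<exists>s' y y'. SEx s' y y' \<and> phi \<rho> d (P s x) = {P s' y} \<and> phi \<rho> d (P s x') = {P s' y'}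
     \<and> 0 < y \<and> y < 1 \<and> 0 < y' \<and> y' < 1"
proof -
  from assms have r: "0 \<le> x" "x \<le> 1" "0 \<le> x'" "x' \<le> 1"
    and av: "\<And>q. min x x' \<le> q \<Longrightarrow> q \<le> max x x' \<Longrightarrow> P s q \<notin> Pset \<rho> d"
    by (auto simp: SEx_def)
  have nd: "\<not> (min x x' \<le> d s \<and> d s \<le> max x x')" using av dp_in by blast
  have mmr: "0 \<le> min x x'" "max x x' \<le> 1" "min x x' \<le> max x x'" using r by auto
  show ?thesis
  proof (cases "x < d s \<and> x' < d s")
    case True
    let ?y = "Lm \<rho> s x" and ?y' = "Lm \<rho> s x'"
    have ph: "phi \<rho> d (P s x) = {P (s+1) ?y}" "phi \<rho> d (P s x') = {P (s+1) ?y'}"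
      using phi_P r True by auto
    have rg: "0 < ?y" "?y < 1" "0 < ?y'" "?y' < 1" using Lm_range r True decI[of s] by auto
    have "SEx (s+1) ?y ?y'"
      unfolding SEx_def
    proof (intro conjI allI impI)
      show "0 \<le> ?y" "?y \<le> 1" "0 \<le> ?y'" "?y' \<le> 1" using rg by auto
      fix q assume q: "min ?y ?y' \<le> q \<and> q \<le> max ?y ?y'"
      have cont: "continuous_on {min x x'..max x x'} (Lm \<rho> s)"
        using continuous_on_subset[OF cont_Lm] mmr by auto
      obtain c where c: "min x x' \<le> c" "c \<le> max x x'" "Lm \<rho> s c = q"
        using ivt_mm[OF cont mmr(3), of q] q mm_swap[of "Lm \<rho> s" x x'] by auto
      have c01: "0 \<le> c" "c \<le> 1" "c < d s" using c mmr True by auto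
      have "P (s+1) q \<in> phi \<rho> d (P s c)" using phi_P[OF c01(1,2), of s] c01(3) c(3) by auto
      moreover have "P s c \<notin> Pset \<rho> d" using av c by blast
      ultimately show "P (s+1) q \<notin> Pset \<rho> d" using back_S by blast
    qed
    thus ?thesis using ph rg by blast
  next
    case False
    hence F: "d s < x" "d s < x'" using nd by auto
    let ?y = "Rm \<rho> s x" and ?y' = "Rm \<rho> s x'"
    have ph: "phi \<rho> d (P s x) = {P (s+2) ?y}" "phi \<rho> d (P s x') = {P (s+2) ?y'}"
      using phi_P r F by auto
    have rg: "0 < ?y" "?y < 1" "0 < ?y'" "?y' < 1" using Rm_range r F decI[of s] by auto
    have "SEx (s+2) ?y ?y'"
      unfolding SEx_def
    proof (intro conjI allI impI)
      show "0 \<le> ?y" "?y \<le> 1" "0 \<le> ?y'" "?y' \<le> 1" using rg by auto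
      fix q assume q: "min ?y ?y' \<le> q \<and> q \<le> max ?y ?y'"
      have cont: "continuous_on {min x x'..max x x'} (Rm \<rho> s)"
        using continuous_on_subset[OF cont_Rm] mmr by auto
      obtain c where c: "min x x' \<le> c" "c \<le> max x x'" "Rm \<rho> s c = q"
        using ivt_mm[OF cont mmr(3), of q] q mm_swap[of "Rm \<rho> s" x x'] by auto
      have c01: "0 \<le> c" "c \<le> 1" "d s < c" using c mmr F by auto
      have "P (s+2) q \<in> phi \<rho> d (P s c)" using phi_P[OF c01(1,2), of s] c01(3) c(3) by auto
      moreover have "P s c \<notin> Pset \<rho> d" using av c by blast
      ultimately show "P (s+2) q \<notin> Pset \<rho> d" using back_S by blast
    qed
    thus ?thesis using ph rg by blast
  qed
qed

definition chainP :: "(nat \<Rightarrow> 3) \<Rightarrow> (nat \<Rightarrow> real) \<Rightarrow> (nat \<Rightarrow> real) \<Rightarrow> bool" where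
  "chainP \<sigma> X X' \<longleftrightarrow> (\<forall>n. SEx (\<sigma> n) (X n) (X' n) \<and>
      phi \<rho> d (P (\<sigma> n) (X n)) = {P (\<sigma> (Suc n)) (X (Suc n))} \<and>
      phi \<rho> d (P (\<sigma> n) (X' n)) = {P (\<sigma> (Suc n)) (X' (Suc n))} \<and>
      0 < X (Suc n) \<and> X (Suc n) < 1 \<and> 0 < X' (Suc n) \<and> X' (Suc n) < 1)"

lemma chain:
  assumes "SEx s x x'"
  shows "\<exists>\<sigma> X X'. \<sigma> 0 = s \<and> X 0 = x \<and> X' 0 = x' \<and> chainP \<sigma> X X'"
proof -
  let ?SE = "\<lambda>(n::nat) (t::3 \<times> real \<times> real). SEx (fst t) (fst (snd t)) (snd (snd t)) \<and> (n = 0 \<longrightarrow> t = (s, x, x'))"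
  let ?NX = "\<lambda>(n::nat) (t::3 \<times> real \<times> real) t'.
      phi \<rho> d (P (fst t) (fst (snd t))) = {P (fst t') (fst (snd t'))} \<and>
      phi \<rho> d (P (fst t) (snd (snd t))) = {P (fst t') (snd (snd t'))} \<and>
      0 < fst (snd t') \<and> fst (snd t') < 1 \<and> 0 < snd (snd t') \<and> snd (snd t') < 1"
  have "\<exists>F. \<forall>n. ?SE n (F n) \<and> ?NX n (F n) (F (Suc n))"
  proof (rule dependent_nat_choice)
    show "\<exists>t. ?SE 0 t" using assms by auto
  next
    fix t n assume "?SE n t"
    hence "SEx (fst t) (fst (snd t)) (snd (snd t))" by blast
    from step[OF this] obtain s' y y' where "SEx s' y y'"
      "phi \<rho> d (P (fst t) (fst (snd t))) = {P s' y}" "phi \<rho> d (P (fst t) (snd (snd t))) = {P s' y'}"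
      "0 < y" "y < 1" "0 < y'" "y' < 1" by blast
    thus "\<exists>t'. ?SE (Suc n) t' \<and> ?NX n t t'" by (intro exI[of _ "(s', y, y')"]) auto
  qed
  then obtain F where F: "\<forall>n. ?SE n (F n) \<and> ?NX n (F n) (F (Suc n))" by blast
  show ?thesis
    by (rule exI[of _ "\<lambda>n. fst (F n)"], rule exI[of _ "\<lambda>n. fst (snd (F n))"], rule exI[of _ "\<lambda>n. snd (snd (F n))"])
       (use F in \<open>auto simp: chainP_def\<close>)
qed

lemma chain_traj:
  assumes "chainP \<sigma> X X'"
  shows "trajectory \<rho> d (\<lambda>n. P (\<sigma> n) (X n))" "trajectory \<rho> d (\<lambda>n. P (\<sigma> n) (X' n))"
  using assms unfolding chainP_def trajectory_def by auto

lemma chain_geo: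
  assumes "chainP \<sigma> X X'"
  shows "\<bar>lo (X (Suc m)) - lo (X' (Suc m))\<bar> \<le> kap ^ m * \<bar>lo (X 1) - lo (X' 1)\<bar>"
proof (induction m)
  case 0 thus ?case by simp
next
  case (Suc m)
  have a: "0 < X (Suc m)" "X (Suc m) < 1" "0 < X' (Suc m)" "X' (Suc m) < 1"
    "phi \<rho> d (P (\<sigma> (Suc m)) (X (Suc m))) = {P (\<sigma> (Suc (Suc m))) (X (Suc (Suc m)))}"
    "phi \<rho> d (P (\<sigma> (Suc m)) (X' (Suc m))) = {P (\<sigma> (Suc (Suc m))) (X' (Suc (Suc m)))}"
    using assms unfolding chainP_def by blast+
  have "\<bar>lo (X (Suc (Suc m))) - lo (X' (Suc (Suc m)))\<bar> \<le> kap * \<bar>lo (X (Suc m)) - lo (X' (Suc m))\<bar>"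
    by (rule contr[OF a])
  also have "\<dots> \<le> kap * (kap ^ m * \<bar>lo (X 1) - lo (X' 1)\<bar>)"
    using Suc.IH kap_bounds(3) by (rule mult_left_mono)
  finally show ?case by (simp add: mult.assoc)
qed

lemma notS_single:
  assumes "0 \<le> x" "x \<le> 1" "P s x \<notin> Pset \<rho> d"
  shows "\<exists>y. phi \<rho> d (P s x) = {y}"
proof -
  have "x \<noteq> d s" using assms(3) dp_in by auto
  thus ?thesis using phi_P[OF assms(1,2), of s] by (auto split: if_splits)
qed

lemma traj_unique:
  assumes w: "trajectory \<rho> d w" and w': "trajectory \<rho> d w'" and e: "w 0 = w' 0" and nS: "w 0 \<notin> Pset \<rho> d"
  shows "w t = w' t"
proof (induction t)
  case 0 show ?case using e .
next
  case (Suc t)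
  have "w t \<notin> Pset \<rho> d" using mono_S[OF w, of t 0] nS by auto
  moreover obtain s x where sx: "0 \<le> x" "x \<le> 1" "w t = P s x" using traj_form[OF w] by blast
  ultimately obtain y where y: "phi \<rho> d (w t) = {y}" using notS_single[OF sx(1,2), of s] by auto
  have "w (Suc t) \<in> phi \<rho> d (w t)" "w' (Suc t) \<in> phi \<rho> d (w' t)" using w w' unfolding trajectory_def by auto
  thus ?case using y Suc.IH by auto
qed

lemma chain_is_traj:
  assumes "chainP \<sigma> X X'" "trajectory \<rho> d w" "w 0 = P (\<sigma> 0) (X 0)" "P (\<sigma> 0) (X 0) \<notin> Pset \<rho> d"
  shows "w t = P (\<sigma> t) (X t)"
  using traj_unique[OF assms(2) chain_traj(1)[OF assms(1)]] assms(3,4) by simp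

lemma chain_is_traj':
  assumes "chainP \<sigma> X X'" "trajectory \<rho> d w" "w 0 = P (\<sigma> 0) (X' 0)" "P (\<sigma> 0) (X' 0) \<notin> Pset \<rho> d"
  shows "w t = P (\<sigma> t) (X' t)"
  using traj_unique[OF assms(2) chain_traj(2)[OF assms(1)]] assms(3,4) by simp

end


context sys begin

lemma chain_dist:
  assumes ch: "chainP \<sigma> X X'"
  shows "(\<lambda>t. dist1 (P (\<sigma> t) (X' t)) (P (\<sigma> t) (X t))) \<longlonglongrightarrow> 0"
proof (rule LIMSEQ_imp_Suc, rule geo_to_zero)
  fix m
  have a: "0 < X (Suc m)" "X (Suc m) < 1" "0 < X' (Suc m)" "X' (Suc m) < 1" using ch unfolding chainP_def by blast+
  show "0 \<le> dist1 (P (\<sigma> (Suc m)) (X' (Suc m))) (P (\<sigma> (Suc m)) (X (Suc m)))" by (rule dist1_nonneg)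
  have "dist1 (P (\<sigma> (Suc m)) (X' (Suc m))) (P (\<sigma> (Suc m)) (X (Suc m))) = \<bar>X (Suc m) - X' (Suc m)\<bar>"
    unfolding dist1_P by simp
  also have "\<dots> \<le> \<bar>lo (X (Suc m)) - lo (X' (Suc m))\<bar>" using lo_lip a by blast
  also have "\<dots> \<le> kap ^ m * \<bar>lo (X 1) - lo (X' 1)\<bar>" by (rule chain_geo[OF ch])
  finally show "dist1 (P (\<sigma> (Suc m)) (X' (Suc m))) (P (\<sigma> (Suc m)) (X (Suc m))) \<le> kap ^ m * \<bar>lo (X 1) - lo (X' 1)\<bar>" .
qed (use kap_bounds in auto)

lemma part2:
  assumes x: "0 \<le> x" "x \<le> 1" and nc: "P i x \<notin> closure (Pset \<rho> d)"
    and w0: "trajectory \<rho> d w0" "w0 0 = P i x" "converges_onto w0 m u"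
  shows "\<exists>\<epsilon>>0. \<forall>z'\<in>Nbhd \<epsilon> i x. (\<exists>!w. trajectory \<rho> d w \<and> w 0 = z') \<and>
            (\<forall>w. trajectory \<rho> d w \<and> w 0 = z' \<longrightarrow> converges_onto w m u)"
proof -
  have "open (- closure (Pset \<rho> d))" by (simp add: open_Compl)
  then obtain e where e: "e > 0" "ball (P i x) e \<subseteq> - closure (Pset \<rho> d)"
    using nc unfolding open_contains_ball by blast
  have far: "P i q \<notin> Pset \<rho> d" if "\<bar>q - x\<bar> < e / 2" for q
  proof -
    have "sqrt 2 < 2" using real_sqrt_less_iff[of 2 4] real_sqrt_four by simp
    hence "sqrt 2 * \<bar>q - x\<bar> \<le> 2 * \<bar>q - x\<bar>" by (intro mult_right_mono) auto
    moreover have "2 * \<bar>q - x\<bar> < 2 * (e / 2)" using that by simp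
    ultimately have "sqrt 2 * \<bar>q - x\<bar> < 2 * (e / 2)" by (rule le_less_trans)
    hence "dist (P i x) (P i q) < e" unfolding dist_norm norm_P by (simp add: abs_minus_commute)
    hence "P i q \<in> - closure (Pset \<rho> d)" using e by auto
    thus ?thesis using closure_subset by blast
  qed
  show ?thesis
  proof (rule exI[of _ "e/2"], intro conjI ballI)
    show "e / 2 > 0" using e by simp
    fix z' assume "z' \<in> Nbhd (e/2) i x"
    then obtain x' where x': "0 \<le> x'" "x' \<le> 1" "z' = P i x'" "\<bar>x' - x\<bar> < e/2" unfolding Nbhd_def by blast
    have se: "SEx i x x'" unfolding SEx_def
    proof (intro conjI allI impI)
      show "0 \<le> x" "x \<le> 1" "0 \<le> x'" "x' \<le> 1" using x x' by auto
      fix q assume q: "min x x' \<le> q \<and> q \<le> max x x'"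
      have "\<bar>q - x\<bar> \<le> \<bar>x' - x\<bar>" using q by (cases "x \<le> x'") auto
      thus "P i q \<notin> Pset \<rho> d" using far x'(4) by simp
    qed
    obtain \<sigma> X X' where ch: "\<sigma> 0 = i" "X 0 = x" "X' 0 = x'" "chainP \<sigma> X X'" using chain[OF se] by blast
    have nS: "P i x \<notin> Pset \<rho> d" "P i x' \<notin> Pset \<rho> d" using far x' e by auto
    have w0e: "w0 t = P (\<sigma> t) (X t)" for t using chain_is_traj[OF ch(4) w0(1)] w0(2) ch nS by simp
    let ?w = "\<lambda>t. P (\<sigma> t) (X' t)"
    have tw: "trajectory \<rho> d ?w" "?w 0 = z'" using chain_traj(2)[OF ch(4)] ch x' by auto
    have uni: "w = ?w" if "trajectory \<rho> d w" "w 0 = z'" for w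
      using chain_is_traj'[OF ch(4) that(1)] that(2) ch x' nS by auto
    show "\<exists>!w. trajectory \<rho> d w \<and> w 0 = z'" using tw uni by blast
    have conv: "converges_onto ?w m u"
      by (rule conv_transfer[OF w0(3)]) (use chain_dist[OF ch(4)] w0e in simp)
    show "\<forall>w. trajectory \<rho> d w \<and> w 0 = z' \<longrightarrow> converges_onto w m u" using uni conv by blast
  qed
qed

end



definition cyc :: "nat \<Rightarrow> (nat \<Rightarrow> pt) \<Rightarrow> nat \<Rightarrow> nat \<Rightarrow> pt" where
  "cyc m u n t = u (((n - 1 + t) mod m) + 1)"

lemma cyc_idx:
  assumes "1 \<le> n" "n \<le> m" "1 \<le> k" "k \<le> m"
  shows "cyc m u n (k + m - n) = u k"
proof -
  have e1: "n - 1 + (k + m - n) = (k - 1) + m" using assms by simp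
  have "k - 1 < m" using assms by simp
  hence "((k - 1) + m) mod m = k - 1" by (metis mod_add_self2 mod_less)
  hence "(n - 1 + (k + m - n)) mod m = k - 1" unfolding e1 .
  thus ?thesis unfolding cyc_def using assms by simp
qed

lemma cyc_range:
  assumes "1 \<le> n" "n \<le> m"
  shows "range (cyc m u n) = u ` {1..m}"
proof
  show "range (cyc m u n) \<subseteq> u ` {1..m}"
  proof
    fix y assume "y \<in> range (cyc m u n)"
    then obtain t where "y = u (((n - 1 + t) mod m) + 1)" unfolding cyc_def by blast
    moreover have "((n - 1 + t) mod m) + 1 \<in> {1..m}" using assms
      by (simp add: Suc_leI)
    ultimately show "y \<in> u ` {1..m}" by blast
  qed
  show "u ` {1..m} \<subseteq> range (cyc m u n)"
  proof
    fix y assume "y \<in> u ` {1..m}"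
    then obtain k where k: "k \<in> {1..m}" "y = u k" by blast
    hence "y = cyc m u n (k + m - n)" using cyc_idx[OF assms, of k] by simp
    thus "y \<in> range (cyc m u n)" by blast
  qed
qed

lemma cyc_0: "1 \<le> n \<Longrightarrow> n \<le> m \<Longrightarrow> cyc m u n 0 = u n"
  unfolding cyc_def by simp

lemma cyc_period: "cyc m u n (t + m) = cyc m u n t"
proof -
  have "n - 1 + (t + m) = (n - 1 + t) + m" by simp
  thus ?thesis unfolding cyc_def by (simp only: mod_add_self2)
qed

lemma cyc_period_mult: "cyc m u n (t + m * k) = cyc m u n t"
proof (induction k)
  case 0 show ?case by simp
next
  case (Suc k)
  have "t + m * Suc k = (t + m * k) + m" by simp
  thus ?case using cyc_period Suc.IH by metis
qed

context sys begin

lemma cyc_traj: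
  assumes po: "periodic_orbit \<rho> d m u" and n: "1 \<le> n" "n \<le> m"
  shows "trajectory \<rho> d (cyc m u n)"
  unfolding trajectory_def
proof
  fix t
  let ?r = "(n - 1 + t) mod m"
  have m1: "m \<ge> 1" using po unfolding periodic_orbit_def by simp
  have r: "?r < m" using m1 by simp
  have nx: "(n - 1 + Suc t) mod m = (if Suc ?r = m then 0 else Suc ?r)"
    by (simp add: mod_Suc)
  show "cyc m u n (Suc t) \<in> phi \<rho> d (cyc m u n t)"
  proof (cases "Suc ?r = m")
    case True thus ?thesis using po nx unfolding cyc_def periodic_orbit_def by simp
  next
    case False
    hence "Suc ?r \<in> {1..<m}" using r by auto
    thus ?thesis using po nx False unfolding cyc_def periodic_orbit_def by auto
  qed
qed

lemma cyc_conv: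
  assumes n: "1 \<le> n" "n \<le> m"
  shows "converges_onto (cyc m u n) m u"
  unfolding converges_onto_def
proof (rule exI[of _ "m - n"], intro ballI)
  fix n' assume n': "n' \<in> {1..m}"
  have "cyc m u n (m * t + n' + (m - n)) = u n'" for t
  proof -
    have "m * t + n' + (m - n) = (n' + m - n) + m * t" using n n' by simp
    thus ?thesis using cyc_period_mult cyc_idx n n' by (metis atLeastAtMost_iff)
  qed
  thus "((\<lambda>t. dist1 (cyc m u n (m * t + n' + (m - n))) (u n')) \<longlongrightarrow> 0) sequentially"
    by (simp add: dist1_def)
qed

lemma part3:
  assumes po: "periodic_orbit \<rho> d m u" and nc: "\<forall>n\<in>{1..m}. u n \<notin> closure (Pset \<rho> d)"
  shows "stable \<rho> d m u"
  unfolding stable_def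
proof (intro ballI allI impI)
  fix n i x assume n: "n \<in> {1..m}" and h: "0 \<le> x \<and> x \<le> 1 \<and> u n = P i x"
  have "\<exists>\<epsilon>>0. \<forall>z'\<in>Nbhd \<epsilon> i x. (\<exists>!w. trajectory \<rho> d w \<and> w 0 = z') \<and>
            (\<forall>w. trajectory \<rho> d w \<and> w 0 = z' \<longrightarrow> converges_onto w m u)"
  proof (rule part2[of x i "cyc m u n"])
    show "0 \<le> x" "x \<le> 1" using h by auto
    show "P i x \<notin> closure (Pset \<rho> d)" using nc n h by metis
    show "trajectory \<rho> d (cyc m u n)" using cyc_traj[OF po] n by auto
    show "cyc m u n 0 = P i x" using cyc_0 n h by auto
    show "converges_onto (cyc m u n) m u" using cyc_conv n by auto
  qed
  thus "\<exists>\<epsilon>>0. \<forall>z'\<in>Nbhd \<epsilon> i x. \<forall>w. trajectory \<rho> d w \<and> w 0 = z' \<longrightarrow> converges_onto w m u"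
    by blast
qed

end




context sys begin

lemma S_alt: "theta \<rho> = \<rho> i + \<rho> (i+1) + \<rho> (i+2) - 1" using rho_sum[of i] by simp

lemma Lm_inj:
  assumes "0 \<le> x" "x \<le> 1" "0 \<le> x'" "x' \<le> 1" "Lm \<rho> i x = Lm \<rho> i x'"
  shows "x = x'"
proof -
  have D: "(1 - \<rho> (i+1)) + theta \<rho> * (1 - x) > 0" "(1 - \<rho> (i+1)) + theta \<rho> * (1 - x') > 0"
    using denL_pos assms by auto
  have "\<rho> i * (1 - x) * ((1 - \<rho> (i+1)) + theta \<rho> * (1 - x')) = \<rho> i * (1 - x') * ((1 - \<rho> (i+1)) + theta \<rho> * (1 - x))"
    using assms(5) D unfolding Lm_def by (simp add: divide_simps)
  hence "(\<rho> i * (1 - \<rho> (i+1))) * (x' - x) = 0" by (simp add: algebra_simps)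
  moreover have "\<rho> i * (1 - \<rho> (i+1)) \<noteq> 0" using rhoI[of i] rhoI[of "i+1"] by simp
  ultimately show ?thesis by simp
qed

lemma Rm_inj:
  assumes "0 \<le> x" "x \<le> 1" "0 \<le> x'" "x' \<le> 1" "Rm \<rho> i x = Rm \<rho> i x'"
  shows "x = x'"
proof -
  have D: "(1 - \<rho> (i+2)) + theta \<rho> * x > 0" "(1 - \<rho> (i+2)) + theta \<rho> * x' > 0"
    using denR_pos assms by auto
  have "((1 - \<rho> (i+2)) * (1 - x) + \<rho> (i+1) * x) * ((1 - \<rho> (i+2)) + theta \<rho> * x')
      = ((1 - \<rho> (i+2)) * (1 - x') + \<rho> (i+1) * x') * ((1 - \<rho> (i+2)) + theta \<rho> * x)"
    using assms(5) D unfolding Rm_def by (simp add: divide_simps)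
  hence "(\<rho> i * (1 - \<rho> (i+2))) * (x' - x) = 0" unfolding S_alt[of i] by (simp add: algebra_simps)
  moreover have "\<rho> i * (1 - \<rho> (i+2)) \<noteq> 0" using rhoI[of i] rhoI[of "i+2"] by simp
  ultimately show ?thesis by simp
qed

lemma L_bound:
  assumes "0 \<le> x" "x \<le> 1"
  shows "\<rho> s - Lm \<rho> s x * (\<rho> s + \<rho> (s+2)) = \<rho> s * (1 - \<rho> (s+1)) * x / ((1 - \<rho> (s+1)) + theta \<rho> * (1 - x))"
proof -
  have D: "(1 - \<rho> (s+1)) + theta \<rho> * (1 - x) > 0" using denL_pos assms by auto
  show ?thesis using D unfolding Lm_def S_alt[of s] by (simp add: divide_simps) (simp add: algebra_simps)
qed

lemma R_bound:
  assumes "0 \<le> x" "x \<le> 1"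
  shows "Rm \<rho> (s+2) x * (\<rho> s + \<rho> (s+2)) - \<rho> s = (1 - \<rho> (s+1)) * \<rho> (s+2) * (1 - x) / ((1 - \<rho> (s+1)) + theta \<rho> * x)"
proof -
  have e: "s + 2 + 2 = s + 1" "s + 2 + 1 = s" using three_ne[of s] by auto
  have R: "Rm \<rho> (s+2) x = ((1 - \<rho> (s+1)) * (1 - x) + \<rho> s * x) / ((1 - \<rho> (s+1)) + theta \<rho> * x)"
    unfolding Rm_def e ..
  have D: "(1 - \<rho> (s+1)) + theta \<rho> * x > 0" using denR_pos[OF assms, of "s+2"] e by auto
  define D' where "D' = (1 - \<rho> (s+1)) + theta \<rho> * x"
  have D'p: "D' \<noteq> 0" using D unfolding D'_def by simp
  have "Rm \<rho> (s+2) x * (\<rho> s + \<rho> (s+2)) - \<rho> s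
      = (((1 - \<rho> (s+1)) * (1 - x) + \<rho> s * x) * (\<rho> s + \<rho> (s+2)) - \<rho> s * D') / D'"
    unfolding R D'_def[symmetric] using D'p by (simp add: field_simps)
  also have "((1 - \<rho> (s+1)) * (1 - x) + \<rho> s * x) * (\<rho> s + \<rho> (s+2)) - \<rho> s * D' = (1 - \<rho> (s+1)) * \<rho> (s+2) * (1 - x)"
    unfolding D'_def S_alt[of s] by (simp add: algebra_simps)
  finally show ?thesis unfolding D'_def .
qed

lemma LR_disj:
  assumes "0 \<le> x" "x \<le> 1" "0 \<le> x'" "x' \<le> 1" "Lm \<rho> s x = Rm \<rho> (s+2) x'"
  shows "x = 0 \<and> x' = 1"
proof -
  have D: "(1 - \<rho> (s+1)) + theta \<rho> * (1 - x) > 0" "(1 - \<rho> (s+1)) + theta \<rho> * x' > 0"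
    using denL_pos[of x s] denR_pos[of x' "s+2"] three_ne[of s] assms by auto
  have a: "1 - \<rho> (s+1) > 0" "\<rho> s > 0" "\<rho> (s+2) > 0" using rhoI by auto
  have t1: "\<rho> s * (1 - \<rho> (s+1)) * x / ((1 - \<rho> (s+1)) + theta \<rho> * (1 - x)) \<ge> 0"
    using D a assms by simp
  have t2: "(1 - \<rho> (s+1)) * \<rho> (s+2) * (1 - x') / ((1 - \<rho> (s+1)) + theta \<rho> * x') \<ge> 0"
    using D a assms by simp
  have sum0: "\<rho> s * (1 - \<rho> (s+1)) * x / ((1 - \<rho> (s+1)) + theta \<rho> * (1 - x))
     + (1 - \<rho> (s+1)) * \<rho> (s+2) * (1 - x') / ((1 - \<rho> (s+1)) + theta \<rho> * x') = 0"
  proof -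
    have "Lm \<rho> s x * (\<rho> s + \<rho> (s+2)) = Rm \<rho> (s+2) x' * (\<rho> s + \<rho> (s+2))" using assms(5) by simp
    thus ?thesis using L_bound[OF assms(1,2), of s] R_bound[OF assms(3,4), of s] by linarith
  qed
  hence z1: "\<rho> s * (1 - \<rho> (s+1)) * x / ((1 - \<rho> (s+1)) + theta \<rho> * (1 - x)) = 0"
    and z2: "(1 - \<rho> (s+1)) * \<rho> (s+2) * (1 - x') / ((1 - \<rho> (s+1)) + theta \<rho> * x') = 0"
    using t1 t2 by linarith+
  show ?thesis using z1 z2 D a by auto
qed

lemma three_eq: fixes s t :: 3
  shows "s + 1 = t + 2 \<Longrightarrow> t = s + 2" "s + 2 = t + 1 \<Longrightarrow> s = t + 2" "s + 1 = t + 1 \<Longrightarrow> s = t" "s + 2 = t + 2 \<Longrightarrow> s = t"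
  by (cases s rule: c3; cases t rule: c3; simp)+

lemma pred_unique:
  assumes ya: "y \<in> phi \<rho> d a" and yb: "y \<in> phi \<rho> d b"
  shows "a = b"
proof -
  obtain s x where sx: "0 \<le> x" "x \<le> 1" "a = P s x" using phi_form[OF ya] by blast
  obtain t x' where tx: "0 \<le> x'" "x' \<le> 1" "b = P t x'" using phi_form[OF yb] by blast
  have ca: "(x \<le> d s \<and> y = P (s+1) (Lm \<rho> s x)) \<or> (d s \<le> x \<and> y = P (s+2) (Rm \<rho> s x))"
    using phi_cases[OF sx(1,2)] ya sx(3) by blast
  have cb: "(x' \<le> d t \<and> y = P (t+1) (Lm \<rho> t x')) \<or> (d t \<le> x' \<and> y = P (t+2) (Rm \<rho> t x'))"
    using phi_cases[OF tx(1,2)] yb tx(3) by blast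
  have iL: "0 < Lm \<rho> i z \<and> Lm \<rho> i z < 1" if "0 \<le> z" "z \<le> d i" for i z
    using Lm_range[of z i] that decI[of i] by simp
  have iR: "0 < Rm \<rho> i z \<and> Rm \<rho> i z < 1" if "d i \<le> z" "z \<le> 1" for i z
    using Rm_range[of z i] that decI[of i] by simp
  from ca show ?thesis
  proof
    assume A: "x \<le> d s \<and> y = P (s+1) (Lm \<rho> s x)"
    from cb show ?thesis
    proof
      assume B: "x' \<le> d t \<and> y = P (t+1) (Lm \<rho> t x')"
      have e: "P (s+1) (Lm \<rho> s x) = P (t+1) (Lm \<rho> t x')" using A B by simp
      have "0 < Lm \<rho> s x \<and> Lm \<rho> s x < 1" using iL sx A by auto
      hence "t + 1 = s + 1 \<and> Lm \<rho> t x' = Lm \<rho> s x" using P_inj_int[OF e] by auto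
      hence "t = s" "Lm \<rho> s x' = Lm \<rho> s x" using three_eq(3) by auto
      hence "x' = x" using sx tx Lm_inj[of x' x s] by auto
      thus ?thesis using sx tx \<open>t = s\<close> by simp
    next
      assume B: "d t \<le> x' \<and> y = P (t+2) (Rm \<rho> t x')"
      have e: "P (s+1) (Lm \<rho> s x) = P (t+2) (Rm \<rho> t x')" using A B by simp
      have "0 < Lm \<rho> s x \<and> Lm \<rho> s x < 1" using iL sx A by auto
      hence h: "t + 2 = s + 1 \<and> Rm \<rho> t x' = Lm \<rho> s x" using P_inj_int[OF e] by auto
      hence ts: "t = s + 2" using three_eq(1)[of s t] by simp
      have "Lm \<rho> s x = Rm \<rho> (s+2) x'" using h unfolding ts by simp
      hence "x = 0 \<and> x' = 1" using LR_disj sx tx by blast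
      thus ?thesis using sx tx ts P_vertex(1)[of s] by simp
    qed
  next
    assume A: "d s \<le> x \<and> y = P (s+2) (Rm \<rho> s x)"
    from cb show ?thesis
    proof
      assume B: "x' \<le> d t \<and> y = P (t+1) (Lm \<rho> t x')"
      have e: "P (t+1) (Lm \<rho> t x') = P (s+2) (Rm \<rho> s x)" using A B by simp
      have "0 < Lm \<rho> t x' \<and> Lm \<rho> t x' < 1" using iL tx B by auto
      hence h: "s + 2 = t + 1 \<and> Rm \<rho> s x = Lm \<rho> t x'" using P_inj_int[OF e] by auto
      hence ts: "s = t + 2" using three_eq(2)[of s t] by simp
      have "Lm \<rho> t x' = Rm \<rho> (t+2) x" using h unfolding ts by simp
      hence "x' = 0 \<and> x = 1" using LR_disj sx tx by blast
      thus ?thesis using sx tx ts P_vertex(1)[of t] by simp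
    next
      assume B: "d t \<le> x' \<and> y = P (t+2) (Rm \<rho> t x')"
      have e: "P (s+2) (Rm \<rho> s x) = P (t+2) (Rm \<rho> t x')" using A B by simp
      have "0 < Rm \<rho> s x \<and> Rm \<rho> s x < 1" using iR sx A by auto
      hence "t + 2 = s + 2 \<and> Rm \<rho> t x' = Rm \<rho> s x" using P_inj_int[OF e] by auto
      hence "t = s" "Rm \<rho> s x' = Rm \<rho> s x" using three_eq(4) by auto
      hence "x' = x" using sx tx Rm_inj[of x' x s] by auto
      thus ?thesis using sx tx \<open>t = s\<close> by simp
    qed
  qed
qed

lemma traj_shift: "trajectory \<rho> d w \<Longrightarrow> trajectory \<rho> d (\<lambda>j. w (c + j))"
  unfolding trajectory_def by simp

lemma periodic_traj:
  assumes w: "trajectory \<rho> d w" and p: "1 \<le> p" and per: "\<And>t. w (t + p) = w t"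
  shows "\<exists>m u. periodic_orbit \<rho> d m u \<and> converges_onto w m u"
proof -
  define u where "u n = w (n - 1)" for n
  have perk: "w (t + p * k) = w t" for t k
  proof (induction k)
    case (Suc k)
    have "t + p * Suc k = (t + p * k) + p" by simp
    thus ?case using per Suc.IH by metis
  qed simp
  have "periodic_orbit \<rho> d p u" unfolding periodic_orbit_def
  proof (intro conjI ballI)
    show "1 \<le> p" by fact
    fix n assume "n \<in> {1..<p}"
    hence "n = Suc (n - 1)" by auto
    thus "u (Suc n) \<in> phi \<rho> d (u n)" using w unfolding u_def trajectory_def by (metis diff_Suc_1)
  next
    have "u 1 = w (Suc (p - 1))" unfolding u_def using per[of 0] p by simp
    thus "u 1 \<in> phi \<rho> d (u p)" using w unfolding u_def trajectory_def by simp
  qed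
  moreover have "converges_onto w p u" unfolding converges_onto_def
  proof (rule exI[of _ "p - 1"], intro ballI)
    fix n assume n: "n \<in> {1..p}"
    have "w (p * t + n + (p - 1)) = u n" for t
    proof -
      have "p * t + n + (p - 1) = (n - 1) + p * Suc t" using n p by simp
      thus ?thesis unfolding u_def using perk by metis
    qed
    thus "((\<lambda>t. dist1 (w (p * t + n + (p - 1))) (u n)) \<longlongrightarrow> 0) sequentially"
      by (simp add: dist1_def)
  qed
  ultimately show ?thesis by blast
qed

lemma case2:
  assumes w: "trajectory \<rho> d w" and F: "finite F" and inF: "\<And>t. w t \<in> F"
  shows "\<exists>m u. periodic_orbit \<rho> d m u \<and> converges_onto w m u"
proof -
  define N where "N = card F"
  have bd: "w a = w b" if "w (Suc a) = w (Suc b)" for a b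
    using pred_unique w that unfolding trajectory_def by metis
  have pull: "w (i - k) = w (j - k)" if "w i = w j" "k \<le> i" "k \<le> j" for i j k
    using that
  proof (induction k)
    case (Suc k)
    have "w (Suc (i - Suc k)) = w (Suc (j - Suc k))" using Suc by (simp add: Suc_diff_Suc)
    thus ?case using bd by blast
  qed simp
  have stepT: "\<exists>p\<in>{1..N}. \<forall>j\<le>T. w j = w (j + p)" for T
  proof -
    have "\<not> inj_on w {T..T+N}"
    proof
      assume "inj_on w {T..T+N}"
      hence "card (w ` {T..T+N}) = N + 1" by (simp add: card_image)
      moreover have "card (w ` {T..T+N}) \<le> N" unfolding N_def using F inF by (intro card_mono) auto
      ultimately show False by simp
    qed
    then obtain a b where ab: "a \<in> {T..T+N}" "b \<in> {T..T+N}" "a \<noteq> b" "w a = w b"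
      unfolding inj_on_def by blast
    then obtain a b where ab: "a \<in> {T..T+N}" "b \<in> {T..T+N}" "a < b" "w a = w b"
      by (metis linorder_neqE_nat)
    show ?thesis
    proof (rule bexI[of _ "b - a"], intro allI impI)
      fix j assume "j \<le> T"
      have "w (a - (a - j)) = w (b - (a - j))" using pull[OF ab(4), of "a - j"] ab by auto
      moreover have "a - (a - j) = j" "b - (a - j) = j + (b - a)" using ab \<open>j \<le> T\<close> by auto
      ultimately show "w j = w (j + (b - a))" by simp
    qed (use ab in auto)
  qed
  have "\<exists>p\<in>{1..N}. \<forall>j. w j = w (j + p)"
  proof (rule ccontr)
    assume "\<not> ?thesis"
    hence "\<forall>p\<in>{1..N}. \<exists>j. w j \<noteq> w (j + p)" by blast
    then obtain J where J: "\<forall>p\<in>{1..N}. w (J p) \<noteq> w (J p + p)" by metis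
    define T where "T = Max (J ` {1..N})"
    obtain p where p: "p \<in> {1..N}" "\<forall>j\<le>T. w j = w (j + p)" using stepT[of T] by blast
    have "J p \<le> T" unfolding T_def using p(1) by (intro Max_ge) auto
    thus False using p J by blast
  qed
  then obtain p where "p \<in> {1..N}" "\<And>j. w (j + p) = w j" by metis
  thus ?thesis using periodic_traj[OF w] by auto
qed

end



lemma geo_conv:
  fixes a :: "nat \<Rightarrow> real"
  assumes b: "\<And>k. \<bar>a (Suc k) - a k\<bar> \<le> C * q ^ k" and q: "0 \<le> q" "q < 1"
  shows "convergent a"
proof -
  have sg: "summable (\<lambda>k. C * q ^ k)" using q by (intro summable_mult summable_geometric) simp
  have sm: "summable (\<lambda>k. a (Suc k) - a k)"
    by (rule summable_comparison_test'[OF sg]) (use b in simp)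
  have "(\<lambda>n. \<Sum>k<n. a (Suc k) - a k) \<longlonglongrightarrow> suminf (\<lambda>k. a (Suc k) - a k)" by (rule summable_LIMSEQ[OF sm])
  hence "(\<lambda>n. a n - a 0) \<longlonglongrightarrow> suminf (\<lambda>k. a (Suc k) - a k)" by (simp only: sum_lessThan_telescope)
  hence "(\<lambda>n. (a n - a 0) + a 0) \<longlonglongrightarrow> suminf (\<lambda>k. a (Suc k) - a k) + a 0" by (intro tendsto_intros)
  thus ?thesis unfolding convergent_def by auto
qed

lemma logi_tendsto: "(g \<longlongrightarrow> A) F \<Longrightarrow> ((\<lambda>k. logi (g k)) \<longlongrightarrow> logi A) F"
proof -
  assume a: "(g \<longlongrightarrow> A) F"
  have "1 + exp A \<noteq> 0" by (smt (verit) exp_gt_zero)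
  thus ?thesis unfolding logi_def using a by (intro tendsto_intros)
qed

context sys begin

definition sig :: "pt \<Rightarrow> (3 \<times> real) set" where
  "sig z = {(s, q). \<exists>x. 0 < x \<and> x < 1 \<and> z = P s x \<and> 0 \<le> q \<and> q \<le> 1 \<and> P s q \<in> Pset \<rho> d \<and> q < x}
     \<union> {(s, 2) | s. \<exists>x. 0 < x \<and> x < 1 \<and> z = P s x}"

lemma sig_fin:
  assumes fin: "finite (Pset \<rho> d)"
  shows "finite (range sig)"
proof -
  have inj: "inj (P s)" for s using P_inj_same by (metis injI)
  define Q where "Q = (\<Union>s. P s -` Pset \<rho> d)"
  have "finite Q" unfolding Q_def using fin inj by (intro finite_UN_I) (auto intro: finite_vimageI)
  hence "finite ((UNIV :: 3 set) \<times> (Q \<union> {2}))" by (intro finite_cartesian_product finite_UNIV) auto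
  hence fQ: "finite (Pow ((UNIV :: 3 set) \<times> (Q \<union> {2})))" by simp
  have "range sig \<subseteq> Pow ((UNIV :: 3 set) \<times> (Q \<union> {2}))" unfolding sig_def Q_def by auto
  thus ?thesis using fQ finite_subset by blast
qed

lemma sig_SE:
  assumes z: "z = P s x" "0 < x" "x < 1" and z': "z' = P s' x'" "0 < x'" "x' < 1"
    and nS: "z \<notin> Pset \<rho> d" "z' \<notin> Pset \<rho> d" and eq: "sig z = sig z'"
  shows "s' = s \<and> SEx s x x'"
proof -
  have "(s, 2) \<in> sig z" unfolding sig_def using z by blast
  hence "(s, 2) \<in> sig z'" using eq by simp
  then obtain x'' where x'': "0 < x''" "x'' < 1" "z' = P s x''" unfolding sig_def by blast
  have e: "P s' x' = P s x''" using z'(1) x''(3) by simp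
  have ss: "s' = s" "x'' = x'" using P_inj_int[OF e z'(2,3)] by auto
  have mem: "(s, q) \<in> sig (P s y) \<longleftrightarrow> (0 \<le> q \<and> q \<le> 1 \<and> P s q \<in> Pset \<rho> d \<and> q < y)"
    if "0 < y" "y < 1" "q \<le> 1" for q y
  proof
    assume "(s, q) \<in> sig (P s y)"
    then consider x0 where "0 < x0" "x0 < 1" "P s y = P s x0" "0 \<le> q" "q \<le> 1" "P s q \<in> Pset \<rho> d" "q < x0"
      | "q = 2" unfolding sig_def by blast
    thus "0 \<le> q \<and> q \<le> 1 \<and> P s q \<in> Pset \<rho> d \<and> q < y"
    proof cases
      case 1 thus ?thesis using P_inj_same[of s y x0] by auto
    next
      case 2 thus ?thesis using that by simp
    qed
  next
    assume "0 \<le> q \<and> q \<le> 1 \<and> P s q \<in> Pset \<rho> d \<and> q < y"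
    thus "(s, q) \<in> sig (P s y)" unfolding sig_def using that by blast
  qed
  have "SEx s x x'" unfolding SEx_def
  proof (intro conjI allI impI)
    show "0 \<le> x" "x \<le> 1" "0 \<le> x'" "x' \<le> 1" using z z' by auto
    fix q assume q: "min x x' \<le> q \<and> q \<le> max x x'"
    show "P s q \<notin> Pset \<rho> d"
    proof
      assume qS: "P s q \<in> Pset \<rho> d"
      have "q \<noteq> x" using qS nS z by auto
      moreover have "q \<noteq> x'" using qS nS z' ss by auto
      moreover have q01: "0 \<le> q" "q \<le> 1" using q z z' by auto
      ultimately have "(x < q \<and> q < x') \<or> (x' < q \<and> q < x)"
      proof (cases "x \<le> x'")
        case True
        hence "x \<le> q" "q \<le> x'" using q by (auto simp: min_def max_def)
        thus ?thesis using \<open>q \<noteq> x\<close> \<open>q \<noteq> x'\<close> by linarith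
      next
        case False
        hence "x' \<le> q" "q \<le> x" using q by (auto simp: min_def max_def)
        thus ?thesis using \<open>q \<noteq> x\<close> \<open>q \<noteq> x'\<close> by linarith
      qed
      thus False
      proof
        assume "x < q \<and> q < x'"
        hence "(s, q) \<in> sig z'" using mem[of x' q] z' ss q01 qS by auto
        hence "(s, q) \<in> sig z" using eq by simp
        thus False using mem[of x q] z q01 \<open>x < q \<and> q < x'\<close> by auto
      next
        assume "x' < q \<and> q < x"
        hence "(s, q) \<in> sig z" using mem[of x q] z q01 qS by auto
        hence "(s, q) \<in> sig z'" using eq by simp
        thus False using mem[of x' q] z' ss q01 \<open>x' < q \<and> q < x\<close> by auto
      qed
    qed
  qed
  thus ?thesis using ss by simp
qed

end


context sys begin

lemma case1:
  assumes w: "trajectory \<rho> d w" and fin: "finite (Pset \<rho> d)" and T: "1 \<le> T"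
    and nS: "\<forall>t\<ge>T. w t \<notin> Pset \<rho> d"
  shows "\<exists>m u. periodic_orbit \<rho> d m u \<and> converges_onto w m u"
proof -
  define g where "g n = sig (w (T + n))" for n
  have "range g \<subseteq> range sig" unfolding g_def by auto
  hence "finite (range g)" using sig_fin[OF fin] finite_subset by blast
  hence "\<not> inj g" using finite_imageD infinite_UNIV_nat by blast
  then obtain a b where "a \<noteq> b" "g a = g b" unfolding inj_def by blast
  then obtain a b where ab: "a < b" "g a = g b" by (metis linorder_neqE_nat)
  define t1 where "t1 = T + a"
  define t2 where "t2 = T + b"
  have t12: "T \<le> t1" "t1 < t2" "sig (w t1) = sig (w t2)" using ab unfolding t1_def t2_def g_def by auto
  obtain s x1 where s1: "0 < x1" "x1 < 1" "w t1 = P s x1" using traj_int[OF w, of t1] T t12 by auto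
  obtain s2 x2 where s2: "0 < x2" "x2 < 1" "w t2 = P s2 x2" using traj_int[OF w, of t2] T t12 by auto
  have nS12: "w t1 \<notin> Pset \<rho> d" "w t2 \<notin> Pset \<rho> d" using nS t12 by auto
  have "s2 = s \<and> SEx s x1 x2" using sig_SE[OF s1(3,1,2) s2(3,1,2) nS12 t12(3)] .
  hence se: "SEx s x1 x2" and s2s: "s2 = s" by auto
  obtain \<sigma> X X' where ch: "\<sigma> 0 = s" "X 0 = x1" "X' 0 = x2" "chainP \<sigma> X X'" using chain[OF se] by blast
  have E1: "w (t1 + j) = P (\<sigma> j) (X j)" for j
    using chain_is_traj[OF ch(4) traj_shift[OF w, of t1]] s1 ch nS12 by simp
  have E2: "w (t2 + j) = P (\<sigma> j) (X' j)" for j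
    using chain_is_traj'[OF ch(4) traj_shift[OF w, of t2]] s2 s2s ch nS12 by simp
  define p where "p = t2 - t1"
  have p1: "1 \<le> p" using t12 unfolding p_def by simp
  have chs: "SEx (\<sigma> n) (X n) (X' n)" "phi \<rho> d (P (\<sigma> n) (X n)) = {P (\<sigma> (Suc n)) (X (Suc n))}"
     "0 < X (Suc n)" "X (Suc n) < 1" for n
    using ch(4) unfolding chainP_def by blast+
  have X01: "0 \<le> X n" "X n \<le> 1" for n using chs(1)[of n] unfolding SEx_def by auto
  have int: "0 < X n \<and> X n < 1" if "1 \<le> n" for n
  proof -
    have "n = Suc (n - 1)" using that by simp
    thus ?thesis using chs(3,4)[of "n - 1"] by metis
  qed
  have shift: "\<sigma> (j + p) = \<sigma> j \<and> X (j + p) = X' j" for j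
  proof -
    have "t1 + (j + p) = t2 + j" unfolding p_def using t12 by simp
    hence "w (t1 + (j + p)) = w (t2 + j)" by (rule arg_cong)
    hence e: "P (\<sigma> (j + p)) (X (j + p)) = P (\<sigma> j) (X' j)" using E1 E2 by simp
    have "0 < X (j + p) \<and> X (j + p) < 1" using int p1 by simp
    thus ?thesis using P_inj_int[OF e] by auto
  qed
  have sper: "\<sigma> (j + k * p) = \<sigma> j" for j k
  proof (induction k)
    case (Suc k)
    have "j + Suc k * p = (j + k * p) + p" by simp
    thus ?case using shift Suc.IH by metis
  qed simp
  define C where "C = \<bar>lo (X 1) - lo (X' 1)\<bar>"
  have C0: "0 \<le> C" unfolding C_def by simp
  have bound: "\<bar>lo (X (Suc m + p)) - lo (X (Suc m))\<bar> \<le> kap ^ m * C" for m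
    using chain_geo[OF ch(4), of m] shift[of "Suc m"] unfolding C_def by (simp add: abs_minus_commute)
  have conv: "\<exists>L. (\<lambda>k. lo (X (n + k * p))) \<longlonglongrightarrow> L" if n1: "1 \<le> n" for n
  proof -
    have "convergent (\<lambda>k. lo (X (n + k * p)))"
    proof (rule geo_conv[of _ C kap])
      fix k
      have e1: "n + Suc k * p = Suc (n - 1 + k * p) + p" using n1 by simp
      have e2: "n + k * p = Suc (n - 1 + k * p)" using n1 by simp
      have "\<bar>lo (X (n + Suc k * p)) - lo (X (n + k * p))\<bar> \<le> kap ^ (n - 1 + k * p) * C"
        using bound[of "n - 1 + k * p"] unfolding e1 e2 .
      also have "\<dots> \<le> kap ^ k * C"
      proof (rule mult_right_mono[OF _ C0])
        have "k \<le> n - 1 + k * p" using p1 by (simp add: trans_le_add2)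
        thus "kap ^ (n - 1 + k * p) \<le> kap ^ k" using kap_bounds by (intro power_decreasing) auto
      qed
      finally show "\<bar>lo (X (n + Suc k * p)) - lo (X (n + k * p))\<bar> \<le> C * kap ^ k" by (simp add: mult.commute)
    qed (use kap_bounds in auto)
    thus ?thesis unfolding convergent_def .
  qed
  have "\<forall>n. \<exists>L. 1 \<le> n \<longrightarrow> (\<lambda>k. lo (X (n + k * p))) \<longlonglongrightarrow> L" using conv by blast
  then obtain A where A: "\<And>n. 1 \<le> n \<Longrightarrow> (\<lambda>k. lo (X (n + k * p))) \<longlonglongrightarrow> A n" by metis
  define Y where "Y n = logi (A n)" for n
  have XY: "(\<lambda>k. X (n + k * p)) \<longlonglongrightarrow> Y n" if "1 \<le> n" for n
  proof -
    have "(\<lambda>k. logi (lo (X (n + k * p)))) \<longlonglongrightarrow> Y n" unfolding Y_def using logi_tendsto[OF A[OF that]] .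
    moreover have "logi (lo (X (n + k * p))) = X (n + k * p)" for k using int[of "n + k * p"] that logi_lo by auto
    ultimately show ?thesis by simp
  qed
  have Y01: "0 < Y n" "Y n < 1" for n unfolding Y_def using logi_range by auto
  have Yper: "Y (n + p) = Y n" if "1 \<le> n" for n
  proof -
    have a1: "(\<lambda>k. X (n + p + k * p)) \<longlonglongrightarrow> Y (n + p)" using XY[of "n+p"] that by simp
    have "(\<lambda>k. X (n + p + k * p)) = (\<lambda>k. X (n + Suc k * p))" by (simp add: algebra_simps)
    moreover have "(\<lambda>k. X (n + Suc k * p)) \<longlonglongrightarrow> Y n" using LIMSEQ_Suc[OF XY[OF that]] by simp
    ultimately show ?thesis using a1 LIMSEQ_unique by metis
  qed
  have stp: "P (\<sigma> (Suc n)) (Y (Suc n)) \<in> phi \<rho> d (P (\<sigma> n) (Y n))" if n1: "1 \<le> n" for n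
  proof -
    have cs: "(X (n + k*p) < d (\<sigma> n) \<and> \<sigma> (Suc n) = \<sigma> n + 1 \<and> X (Suc n + k*p) = Lm \<rho> (\<sigma> n) (X (n + k*p)))
       \<or> (d (\<sigma> n) < X (n + k*p) \<and> \<sigma> (Suc n) = \<sigma> n + 2 \<and> X (Suc n + k*p) = Rm \<rho> (\<sigma> n) (X (n + k*p)))" for k
    proof -
      have "phi \<rho> d (P (\<sigma> (n + k*p)) (X (n + k*p))) = {P (\<sigma> (Suc (n + k*p))) (X (Suc (n + k*p)))}" by (rule chs(2))
      moreover have "\<sigma> (n + k*p) = \<sigma> n" "\<sigma> (Suc (n + k*p)) = \<sigma> (Suc n)" using sper[of n k] sper[of "Suc n" k] by simp_all
      ultimately have "phi \<rho> d (P (\<sigma> n) (X (n + k*p))) = {P (\<sigma> (Suc n)) (X (Suc n + k*p))}" by simp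
      thus ?thesis using phi_single[OF X01] by blast
    qed
    have lim1: "(\<lambda>k. X (n + k*p)) \<longlonglongrightarrow> Y n" by (rule XY[OF n1])
    have lim2: "(\<lambda>k. X (Suc n + k*p)) \<longlonglongrightarrow> Y (Suc n)" using XY[of "Suc n"] by simp
    have ev: "\<forall>\<^sub>F k in sequentially. X (n + k*p) \<in> {0..1}" using X01 by auto
    show ?thesis
    proof (cases "\<sigma> (Suc n) = \<sigma> n + 1")
      case True
      hence L: "X (n + k*p) < d (\<sigma> n)" "X (Suc n + k*p) = Lm \<rho> (\<sigma> n) (X (n + k*p))" for k
        using cs[of k] three_ne[of "\<sigma> n"] by auto
      have Yd: "Y n \<le> d (\<sigma> n)" using L(1) by (intro LIMSEQ_le_const2[OF lim1]) (auto intro: less_imp_le)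
      have "(\<lambda>k. Lm \<rho> (\<sigma> n) (X (n + k*p))) \<longlonglongrightarrow> Lm \<rho> (\<sigma> n) (Y n)"
        by (rule continuous_on_tendsto_compose[OF cont_Lm lim1]) (use Y01[of n] ev in \<open>auto intro: less_imp_le\<close>)
      hence "(\<lambda>k. X (Suc n + k*p)) \<longlonglongrightarrow> Lm \<rho> (\<sigma> n) (Y n)" using L(2) by simp
      hence "Y (Suc n) = Lm \<rho> (\<sigma> n) (Y n)" using lim2 LIMSEQ_unique by blast
      thus ?thesis using phi_P[of "Y n" "\<sigma> n"] Y01[of n] Yd True by auto
    next
      case False
      hence R: "d (\<sigma> n) < X (n + k*p)" "\<sigma> (Suc n) = \<sigma> n + 2" "X (Suc n + k*p) = Rm \<rho> (\<sigma> n) (X (n + k*p))" for k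
        using cs[of k] by auto
      have Yd: "d (\<sigma> n) \<le> Y n" using R(1) by (intro LIMSEQ_le_const[OF lim1]) (auto intro: less_imp_le)
      have "(\<lambda>k. Rm \<rho> (\<sigma> n) (X (n + k*p))) \<longlonglongrightarrow> Rm \<rho> (\<sigma> n) (Y n)"
        by (rule continuous_on_tendsto_compose[OF cont_Rm lim1]) (use Y01[of n] ev in \<open>auto intro: less_imp_le\<close>)
      hence "(\<lambda>k. X (Suc n + k*p)) \<longlonglongrightarrow> Rm \<rho> (\<sigma> n) (Y n)" using R(3) by simp
      hence "Y (Suc n) = Rm \<rho> (\<sigma> n) (Y n)" using lim2 LIMSEQ_unique by blast
      moreover have "P (\<sigma> n + 2) (Rm \<rho> (\<sigma> n) (Y n)) \<in> phi \<rho> d (P (\<sigma> n) (Y n))"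
        using phi_P[of "Y n" "\<sigma> n"] Y01[of n] Yd by auto
      ultimately show ?thesis using R(2) by simp
    qed
  qed
  define u where "u n = P (\<sigma> n) (Y n)" for n
  have po: "periodic_orbit \<rho> d p u"
    unfolding periodic_orbit_def
  proof (intro conjI ballI)
    show "1 \<le> p" by fact
    fix n assume "n \<in> {1..<p}"
    thus "u (Suc n) \<in> phi \<rho> d (u n)" unfolding u_def using stp by auto
  next
    have "u (Suc p) \<in> phi \<rho> d (u p)" unfolding u_def using stp p1 by auto
    moreover have "u (Suc p) = u 1" unfolding u_def using shift[of 1] Yper[of 1] by simp
    ultimately show "u 1 \<in> phi \<rho> d (u p)" by simp
  qed
  have co: "converges_onto w p u" unfolding converges_onto_def
  proof (rule exI[of _ t1], intro ballI)
    fix n assume n: "n \<in> {1..p}"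
    have ww: "w (p * t + n + t1) = P (\<sigma> n) (X (n + t * p))" for t
    proof -
      have e: "p * t + n + t1 = t1 + (n + t * p)" by simp
      show ?thesis unfolding e using E1[of "n + t * p"] sper[of n t] by simp
    qed
    have n1: "1 \<le> n" using n by simp
    have "(\<lambda>t. X (n + t * p) - Y n) \<longlonglongrightarrow> Y n - Y n" using tendsto_diff[OF XY[OF n1] tendsto_const[of "Y n"]] .
    hence "(\<lambda>t. X (n + t * p) - Y n) \<longlonglongrightarrow> 0" by simp
    hence "(\<lambda>t. \<bar>X (n + t * p) - Y n\<bar>) \<longlonglongrightarrow> 0" by (rule tendsto_rabs_zero)
    thus "((\<lambda>t. dist1 (w (p * t + n + t1)) (u n)) \<longlongrightarrow> 0) sequentially"
      unfolding ww u_def dist1_P .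
  qed
  show ?thesis using po co by blast
qed

end


context sys begin

lemma part1b:
  assumes fin: "finite (Pset \<rho> d)" and w: "trajectory \<rho> d w"
  shows "\<exists>m u. periodic_orbit \<rho> d m u \<and> converges_onto w m u"
proof (cases "\<forall>t. w t \<in> Pset \<rho> d")
  case True thus ?thesis using case2[OF w fin] by blast
next
  case False
  then obtain t0 where t0: "w t0 \<notin> Pset \<rho> d" by blast
  have "\<forall>t\<ge>Suc t0. w t \<notin> Pset \<rho> d" using mono_S[OF w] t0 by (meson Suc_leD)
  thus ?thesis using case1[OF w fin, of "Suc t0"] by simp
qed

lemma orbit_int:
  assumes po: "periodic_orbit \<rho> d m u" and n: "1 \<le> n" "n \<le> m"
  shows "\<exists>s x. 0 < x \<and> x < 1 \<and> u n = P s x"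
proof -
  have m1: "1 \<le> m" using n by simp
  have "cyc m u n (0 + m) = cyc m u n 0" by (rule cyc_period)
  hence "cyc m u n m = u n" using cyc_0[OF n] by simp
  thus ?thesis using traj_int[OF cyc_traj[OF po n] m1] by metis
qed

lemma orbit_S:
  assumes po: "periodic_orbit \<rho> d m u" and n: "n \<in> {1..m}" "u n \<in> Pset \<rho> d" and k: "k \<in> {1..m}"
  shows "u k \<in> Pset \<rho> d"
proof -
  have k1: "1 \<le> k" "k \<le> m" using k by auto
  have "cyc m u k (n + m - k) = u n" using cyc_idx[of k m n u] k n by auto
  hence "cyc m u k (n + m - k) \<in> Pset \<rho> d" using n by simp
  hence "cyc m u k 0 \<in> Pset \<rho> d" using mono_S[OF cyc_traj[OF po k1]] by blast
  thus ?thesis using cyc_0[OF k1] by simp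
qed

lemma orbit_unique:
  assumes po: "periodic_orbit \<rho> d m u" and po': "periodic_orbit \<rho> d m' u'"
    and n: "n \<in> {1..m}" and n': "n' \<in> {1..m'}"
    and nS: "\<forall>k\<in>{1..m}. u k \<notin> Pset \<rho> d" and nS': "\<forall>k\<in>{1..m'}. u' k \<notin> Pset \<rho> d"
    and eq: "sig (u n) = sig (u' n')"
  shows "u ` {1..m} = u' ` {1..m'}"
proof -
  have n1: "1 \<le> n" "n \<le> m" and n1': "1 \<le> n'" "n' \<le> m'" using n n' by auto
  obtain s x where sx: "0 < x" "x < 1" "u n = P s x" using orbit_int[OF po n1] by blast
  obtain s' x' where sx': "0 < x'" "x' < 1" "u' n' = P s' x'" using orbit_int[OF po' n1'] by blast
  have z: "u n \<notin> Pset \<rho> d" "u' n' \<notin> Pset \<rho> d" using nS nS' n n' by auto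
  have "s' = s \<and> SEx s x x'" using sig_SE[OF sx(3,1,2) sx'(3,1,2) z eq] .
  hence ss: "s' = s" and se: "SEx s x x'" by auto
  obtain \<sigma> X X' where ch: "\<sigma> 0 = s" "X 0 = x" "X' 0 = x'" "chainP \<sigma> X X'" using chain[OF se] by blast
  let ?c = "cyc m u n" and ?c' = "cyc m' u' n'"
  have tc: "trajectory \<rho> d ?c" "trajectory \<rho> d ?c'" using cyc_traj[OF po n1] cyc_traj[OF po' n1'] by auto
  have c0: "?c 0 = P s x" "?c' 0 = P s x'" using cyc_0[OF n1] cyc_0[OF n1'] sx sx' ss by auto
  have nS0: "P s x \<notin> Pset \<rho> d" "P s x' \<notin> Pset \<rho> d" using z sx sx' ss by auto
  have Ec: "?c t = P (\<sigma> t) (X t)" for t using chain_is_traj[OF ch(4) tc(1)] c0 ch nS0 by simp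
  have Ec': "?c' t = P (\<sigma> t) (X' t)" for t using chain_is_traj'[OF ch(4) tc(2)] c0 ch nS0 by simp
  define N where "N = m * m'"
  have N1: "1 \<le> N" unfolding N_def using n1 n1' by simp
  define C where "C = \<bar>lo (X 1) - lo (X' 1)\<bar>"
  have bnd: "\<bar>lo x - lo x'\<bar> \<le> kap ^ j * C" for j
  proof -
    define t where "t = N * Suc j"
    have te: "t = 0 + m * (m' * Suc j)" unfolding t_def N_def by (simp only: algebra_simps)
    have "?c (0 + m * (m' * Suc j)) = ?c 0" by (rule cyc_period_mult)
    hence "?c t = P s x" unfolding te using c0 by simp
    hence Xt: "X t = x" using Ec[of t] P_inj_int[of s x "\<sigma> t" "X t"] sx by auto
    have te': "t = 0 + m' * (m * Suc j)" unfolding t_def N_def by (simp only: algebra_simps)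
    have "?c' (0 + m' * (m * Suc j)) = ?c' 0" by (rule cyc_period_mult)
    hence "?c' t = P s x'" unfolding te' using c0 by simp
    hence Xt': "X' t = x'" using Ec'[of t] P_inj_int[of s x' "\<sigma> t" "X' t"] sx' by auto
    have t1: "t = Suc (t - 1)" unfolding t_def using N1 by simp
    have "\<bar>lo x - lo x'\<bar> \<le> kap ^ (t - 1) * C"
      using chain_geo[OF ch(4), of "t - 1"] t1 Xt Xt' unfolding C_def by metis
    also have "\<dots> \<le> kap ^ j * C"
    proof (rule mult_right_mono)
      have jN: "j \<le> N * j" using N1 by simp
      have "t = N + N * j" unfolding t_def by simp
      hence "j \<le> t - 1" using jN N1 by arith
      thus "kap ^ (t - 1) \<le> kap ^ j" using kap_bounds by (intro power_decreasing) auto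
    qed (simp add: C_def)
    finally show ?thesis .
  qed
  have "\<bar>lo x - lo x'\<bar> = 0"
  proof (rule ccontr)
    assume "\<bar>lo x - lo x'\<bar> \<noteq> 0"
    hence pos: "0 < \<bar>lo x - lo x'\<bar>" by simp
    have "(\<lambda>j. kap ^ j * C) \<longlonglongrightarrow> 0" by (rule tendsto_mult_left_zero[OF LIMSEQ_power_zero]) (use kap_bounds in simp)
    from order_tendstoD(2)[OF this pos] obtain j where "kap ^ j * C < \<bar>lo x - lo x'\<bar>"
      by (meson eventually_sequentially order.refl)
    thus False using bnd[of j] by simp
  qed
  hence "x = x'" using lo_inj sx sx' by simp
  hence "?c = ?c'" using traj_unique[OF tc] c0 nS0 by auto
  thus ?thesis using cyc_range[OF n1] cyc_range[OF n1'] by metis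
qed

lemma part1a:
  assumes fin: "finite (Pset \<rho> d)"
  shows "finite {u ` {1..m} | m u. periodic_orbit \<rho> d m u}"
proof -
  let ?O = "{u ` {1..m} | m u. periodic_orbit \<rho> d m u}"
  let ?O2 = "{u ` {1..m} | m u. periodic_orbit \<rho> d m u \<and> (\<forall>k\<in>{1..m}. u k \<notin> Pset \<rho> d)}"
  have split: "?O \<subseteq> Pow (Pset \<rho> d) \<union> ?O2"
  proof
    fix I assume "I \<in> ?O"
    then obtain m u where I: "I = u ` {1..m}" "periodic_orbit \<rho> d m u" by blast
    show "I \<in> Pow (Pset \<rho> d) \<union> ?O2"
    proof (cases "\<exists>n\<in>{1..m}. u n \<in> Pset \<rho> d")
      case True
      hence "I \<subseteq> Pset \<rho> d" using orbit_S[OF I(2)] I(1) by blast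
      thus ?thesis by blast
    next
      case False thus ?thesis using I by blast
    qed
  qed
  define G where "G \<tau> = (SOME I. I \<in> ?O2 \<and> (\<exists>z\<in>I. sig z = \<tau>))" for \<tau>
  have "?O2 \<subseteq> G ` range sig"
  proof
    fix I assume "I \<in> ?O2"
    then obtain m u where I: "I = u ` {1..m}" "periodic_orbit \<rho> d m u" "\<forall>k\<in>{1..m}. u k \<notin> Pset \<rho> d" by blast
    have m1: "1 \<in> {1..m}" using I(2) unfolding periodic_orbit_def by simp
    have ex: "I \<in> ?O2 \<and> (\<exists>z\<in>I. sig z = sig (u 1))" using I m1 by blast
    have G1: "G (sig (u 1)) \<in> ?O2 \<and> (\<exists>z\<in>G (sig (u 1)). sig z = sig (u 1))"
      unfolding G_def by (rule someI[of _ I]) (rule ex)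
    then obtain m' u' z where I': "G (sig (u 1)) = u' ` {1..m'}" "periodic_orbit \<rho> d m' u'"
      "\<forall>k\<in>{1..m'}. u' k \<notin> Pset \<rho> d" "z \<in> G (sig (u 1))" "sig z = sig (u 1)" by blast
    then obtain n' where n': "n' \<in> {1..m'}" "z = u' n'" by blast
    have "u ` {1..m} = u' ` {1..m'}"
      by (rule orbit_unique[OF I(2) I'(2) m1 n'(1) I(3) I'(3)]) (use I' n' in simp)
    hence "I = G (sig (u 1))" using I(1) I'(1) by simp
    thus "I \<in> G ` range sig" by blast
  qed
  hence "finite ?O2" using sig_fin[OF fin] finite_subset by blast
  thus ?thesis using split fin finite_subset by blast
qed

end


theorem lemma4p7:
  fixes \<rho> d :: "3 \<Rightarrow> real"
  assumes rho: "\<forall>i. 0 < \<rho> i \<and> \<rho> i < 1"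
    and heavy: "\<rho> 1 + \<rho> 2 + \<rho> 3 > 1"
    and dec: "\<forall>i. 0 < d i \<and> d i < 1"
  shows
    "(finite (Pset \<rho> d) \<longrightarrow>
        finite {u ` {1..m} | m u. periodic_orbit \<rho> d m u} \<and>
        (\<forall>w. trajectory \<rho> d w \<longrightarrow> (\<exists>m u. periodic_orbit \<rho> d m u \<and> converges_onto w m u)))
     \<and>
     (\<forall>i x m u. 0 \<le> x \<and> x \<le> 1 \<and> P i x \<notin> closure (Pset \<rho> d) \<and> periodic_orbit \<rho> d m u \<and>
        (\<exists>w. trajectory \<rho> d w \<and> w 0 = P i x \<and> converges_onto w m u) \<longrightarrow>
        (\<exists>\<epsilon>>0. \<forall>z'\<in>Nbhd \<epsilon> i x.
            (\<exists>!w. trajectory \<rho> d w \<and> w 0 = z') \<and>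
            (\<forall>w. trajectory \<rho> d w \<and> w 0 = z' \<longrightarrow> converges_onto w m u)))
     \<and>
     (\<forall>m u. periodic_orbit \<rho> d m u \<and> (\<forall>n\<in>{1..m}. u n \<notin> closure (Pset \<rho> d)) \<longrightarrow>
        stable \<rho> d m u)"
proof -
  interpret sys \<rho> d using rho heavy dec by unfold_locales
  have A: "finite (Pset \<rho> d) \<longrightarrow>
        finite {u ` {1..m} | m u. periodic_orbit \<rho> d m u} \<and>
        (\<forall>w. trajectory \<rho> d w \<longrightarrow> (\<exists>m u. periodic_orbit \<rho> d m u \<and> converges_onto w m u))"
    using part1a part1b by blast
  have B: "\<forall>i x m u. 0 \<le> x \<and> x \<le> 1 \<and> P i x \<notin> closure (Pset \<rho> d) \<and> periodic_orbit \<rho> d m u \<and>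
        (\<exists>w. trajectory \<rho> d w \<and> w 0 = P i x \<and> converges_onto w m u) \<longrightarrow>
        (\<exists>\<epsilon>>0. \<forall>z'\<in>Nbhd \<epsilon> i x.
            (\<exists>!w. trajectory \<rho> d w \<and> w 0 = z') \<and>
            (\<forall>w. trajectory \<rho> d w \<and> w 0 = z' \<longrightarrow> converges_onto w m u))"
  proof (intro allI impI)
    fix i x m u
    assume h: "0 \<le> x \<and> x \<le> 1 \<and> P i x \<notin> closure (Pset \<rho> d) \<and> periodic_orbit \<rho> d m u \<and>
        (\<exists>w. trajectory \<rho> d w \<and> w 0 = P i x \<and> converges_onto w m u)"
    then obtain w0 where w0: "trajectory \<rho> d w0" "w0 0 = P i x" "converges_onto w0 m u" by blast
    show "\<exists>\<epsilon>>0. \<forall>z'\<in>Nbhd \<epsilon> i x.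
            (\<exists>!w. trajectory \<rho> d w \<and> w 0 = z') \<and>
            (\<forall>w. trajectory \<rho> d w \<and> w 0 = z' \<longrightarrow> converges_onto w m u)"
      using part2[of x i w0 m u] h w0 by blast
  qed
  have C: "\<forall>m u. periodic_orbit \<rho> d m u \<and> (\<forall>n\<in>{1..m}. u n \<notin> closure (Pset \<rho> d)) \<longrightarrow>
        stable \<rho> d m u"
    using part3 by blast
  show ?thesis using A B C by blast
qed

end
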